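(* Let $(W,g,V)\in BT_n$. Let $a=\dim(W\cap V^\perp)$, $b=\dim(V\cap W^\perp)$, and let $c$ be the rank of the pairing $\langle-,-\rangle$ restricted to $(W\cap\mathbb{F}_q^n)\times(V\cap\mathbb{F}_q^n)$. Then there is $x\in GL_n(\mathbb{F}_q)$ with $x\cdot(W,g,V)=(W',g',V')$ where, writing $E_1=\mathrm{span}\{e_1,\dots,e_a\}$, $E_2=\mathrm{span}\{e_{a+1},\dots,e_{n-b-c}\}$, $E_3=\mathrm{span}\{e_{n-b-c+1},\dots,e_{n-c}\}$, $E_4=\mathrm{span}\{e_{n-c+1},e_{n-c+2},\dots\}$, we have $V'=E_3\oplus E_4$, $W'=E_1\oplus E_4$, and $g'$, as an element of $GL_n(\mathbb{F}_q)$ written in blocks of sizes $a,\,n-a-b-c,\,b,\,c$, has the form \[ \begin{bmatrix}\mathrm{Id}&0&0&0\\ C&A&0&0\\ D&B&\mathrm{Id}&0\\ 0&0&0&\mathrm{Id}\end{bmatrix} \] for some matrices $A,B,C,D$.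
   Context: $\mathbb{F}_q^\infty$ has basis $e_1,e_2,\dots$; $\mathbb{F}_q^n=\mathrm{span}\{e_1,\dots,e_n\}$. $GL_\infty(\mathbb{F}_q)=\varinjlim GL_n(\mathbb{F}_q)$ under $g\mapsto\operatorname{diag}(g,\mathrm{Id})$, i.e. invertible $\mathbb{Z}_{>0}\times\mathbb{Z}_{>0}$ matrices differing from the identity in finitely many entries; $g^T$ is the transpose. A subspace is smooth if it contains $e_i$ for all sufficiently large $i$. A bounding triple is $(W,g,V)$ with $W,V$ smooth, $g\in GL_\infty(\mathbb{F}_q)$, $g$ acting as identity on $V$ and $g^T$ acting as identity on $W$. $BT_n$ is the set of bounding triples with $e_{n+1},e_{n+2},\dots\in V\cap W$. $GL_\infty(\mathbb{F}_q)$ acts by $x\cdot(W,g,V)=(x^{-T}W,xgx^{-1},xV)$, $x^{-T}=(x^{-1})^T$. $\langle-,-\rangle$ is the bilinear pairing with $\langle e_i,e_j\rangle=\delta_{ij}$; $W^\perp=\{v:\langle w,v\rangle=0\ \forall w\in W\}$ and $V^\perp=\{w:\langle w,v\rangle=0\ \forall v\in V\}$. *)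

theory Defs
  imports Complex_Main "HOL-Library.Function_Algebras"
begin

text \<open>The field F_q is a type 'a of class field and finite.
Vectors of F_q^infinity are finitely supported functions nat => 'a.
INDEXING IS 0-BASED: the paper's basis vector e_i is ev (i - 1) here, so the
paper's F_q^n = span of e_1..e_n is span of ev 0 .. ev (n-1).
Matrices are functions nat => nat => 'a (entry in row i, column j).\<close>

definition fscale :: "'a::field \<Rightarrow> (nat \<Rightarrow> 'a) \<Rightarrow> (nat \<Rightarrow> 'a)" where
  "fscale c v = (\<lambda>i. c * v i)"

lemma vector_space_fscale: "vector_space (fscale :: 'a::field \<Rightarrow> _)"
  by unfold_locales (auto simp: fscale_def fun_eq_iff algebra_simps)

interpretation fs: vector_space "fscale :: 'a::field \<Rightarrow> (nat \<Rightarrow> 'a) \<Rightarrow> (nat \<Rightarrow> 'a)"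
  by (rule vector_space_fscale)

definition Finf :: "(nat \<Rightarrow> 'a::zero) set" where
  "Finf = {v. finite {i. v i \<noteq> 0}}"

definition ev :: "nat \<Rightarrow> nat \<Rightarrow> 'a::{zero,one}" where
  "ev i = (\<lambda>j. if j = i then 1 else 0)"

definition Fn :: "nat \<Rightarrow> (nat \<Rightarrow> 'a::field) set" where
  "Fn n = fs.span (ev ` {..<n})"

definition subsp :: "(nat \<Rightarrow> 'a::field) set \<Rightarrow> bool" where
  "subsp V \<longleftrightarrow> fs.subspace V \<and> V \<subseteq> Finf"

definition smooth :: "(nat \<Rightarrow> 'a::field) set \<Rightarrow> bool" where
  "smooth V \<longleftrightarrow> subsp V \<and> (\<exists>N. \<forall>i\<ge>N. ev i \<in> V)"

definition pair :: "(nat \<Rightarrow> 'a::field) \<Rightarrow> (nat \<Rightarrow> 'a) \<Rightarrow> 'a" where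
  "pair u v = (\<Sum>i\<in>{i. u i \<noteq> 0}. u i * v i)"

text \<open>W^perp = {v. <w,v> = 0 for all w in W} (right perp),
  V^perp = {w. <w,v> = 0 for all v in V} (left perp); both inside F_q^infinity.
  Since the pairing is symmetric these coincide as sets.\<close>
definition perpR :: "(nat \<Rightarrow> 'a::field) set \<Rightarrow> (nat \<Rightarrow> 'a) set" where
  "perpR W = {v \<in> Finf. \<forall>w\<in>W. pair w v = 0}"

definition perpL :: "(nat \<Rightarrow> 'a::field) set \<Rightarrow> (nat \<Rightarrow> 'a) set" where
  "perpL V = {w \<in> Finf. \<forall>v\<in>V. pair w v = 0}"

text \<open>Rank of the pairing restricted to A x B: the rank of the induced linear
  map B -> A^*, i.e. dim B minus the dimension of its kernel.\<close>
definition pairing_rank :: "(nat \<Rightarrow> 'a::field) set \<Rightarrow> (nat \<Rightarrow> 'a) set \<Rightarrow> nat" where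
  "pairing_rank A B = fs.dim B - fs.dim {v \<in> B. \<forall>w\<in>A. pair w v = 0}"

definition idm :: "nat \<Rightarrow> nat \<Rightarrow> 'a::{zero,one}" where
  "idm i j = (if i = j then 1 else 0)"

definition mmult :: "(nat \<Rightarrow> nat \<Rightarrow> 'a::field) \<Rightarrow> (nat \<Rightarrow> nat \<Rightarrow> 'a) \<Rightarrow> (nat \<Rightarrow> nat \<Rightarrow> 'a)" where
  "mmult g h = (\<lambda>i j. \<Sum>k\<in>{k. g i k \<noteq> 0}. g i k * h k j)"

definition mvec :: "(nat \<Rightarrow> nat \<Rightarrow> 'a::field) \<Rightarrow> (nat \<Rightarrow> 'a) \<Rightarrow> (nat \<Rightarrow> 'a)" where
  "mvec g v = (\<lambda>i. \<Sum>k\<in>{k. v k \<noteq> 0}. g i k * v k)"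

definition mtrans :: "(nat \<Rightarrow> nat \<Rightarrow> 'a) \<Rightarrow> (nat \<Rightarrow> nat \<Rightarrow> 'a)" where
  "mtrans g = (\<lambda>i j. g j i)"

definition finid :: "(nat \<Rightarrow> nat \<Rightarrow> 'a::{zero,one}) \<Rightarrow> bool" where
  "finid g \<longleftrightarrow> finite {(i, j). g i j \<noteq> idm i j}"

definition GLinf :: "(nat \<Rightarrow> nat \<Rightarrow> 'a::field) set" where
  "GLinf = {g. finid g \<and> (\<exists>h. finid h \<and> mmult g h = idm \<and> mmult h g = idm)}"

text \<open>GL_n(F_q), embedded in GL_infinity via g |-> diag(g, Id).\<close>
definition GLn :: "nat \<Rightarrow> (nat \<Rightarrow> nat \<Rightarrow> 'a::field) set" where
  "GLn n = {g \<in> GLinf. \<forall>i j. (n \<le> i \<or> n \<le> j) \<longrightarrow> g i j = idm i j}"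

definition minv :: "(nat \<Rightarrow> nat \<Rightarrow> 'a::field) \<Rightarrow> (nat \<Rightarrow> nat \<Rightarrow> 'a)" where
  "minv g = (THE h. finid h \<and> mmult g h = idm \<and> mmult h g = idm)"

definition bounding_triple ::
  "(nat \<Rightarrow> 'a::field) set \<Rightarrow> (nat \<Rightarrow> nat \<Rightarrow> 'a) \<Rightarrow> (nat \<Rightarrow> 'a) set \<Rightarrow> bool" where
  "bounding_triple W g V \<longleftrightarrow> smooth W \<and> smooth V \<and> g \<in> GLinf \<and>
     (\<forall>v\<in>V. mvec g v = v) \<and> (\<forall>w\<in>W. mvec (mtrans g) w = w)"

text \<open>BT_n: e_{n+1}, e_{n+2}, ... (0-based: ev n, ev (n+1), ...) lie in V and W.\<close>
definition BT :: "nat \<Rightarrow> ((nat \<Rightarrow> 'a::field) set \<times> (nat \<Rightarrow> nat \<Rightarrow> 'a) \<times> (nat \<Rightarrow> 'a) set) set" where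
  "BT n = {(W, g, V). bounding_triple W g V \<and> (\<forall>i\<ge>n. ev i \<in> V \<inter> W)}"

definition act ::
  "(nat \<Rightarrow> nat \<Rightarrow> 'a::field) \<Rightarrow> ((nat \<Rightarrow> 'a) set \<times> (nat \<Rightarrow> nat \<Rightarrow> 'a) \<times> (nat \<Rightarrow> 'a) set)
     \<Rightarrow> ((nat \<Rightarrow> 'a) set \<times> (nat \<Rightarrow> nat \<Rightarrow> 'a) \<times> (nat \<Rightarrow> 'a) set)" where
  "act x T = (case T of (W, g, V) \<Rightarrow>
     (mvec (mtrans (minv x)) ` W, mmult (mmult x g) (minv x), mvec x ` V))"

end

theory Submission
  imports Defs
begin




lemma sum_fun_apply: "(\<Sum>i\<in>A. F i) x = (\<Sum>i\<in>A. F i x)"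
  by (induction A rule: infinite_finite_induct) auto

lemma fscale_apply[simp]: "fscale c v i = c * v i"
  by (simp add: fscale_def)

lemma ev_apply: "ev i j = (if j = i then 1 else 0)"
  by (simp add: ev_def)

lemma finite_supp_Finf: "v \<in> Finf \<Longrightarrow> finite {i. v i \<noteq> 0}"
  by (simp add: Finf_def)

lemma Finf_subspace: "fs.subspace (Finf :: (nat \<Rightarrow> 'k::field) set)"
proof -
  have "finite {i. (x + y) i \<noteq> 0}" if "x \<in> Finf" "y \<in> Finf" for x y :: "nat \<Rightarrow> 'k"
    by (rule finite_subset[of _ "{i. x i \<noteq> 0} \<union> {i. y i \<noteq> 0}"]) (use that in \<open>auto simp: Finf_def\<close>)
  moreover have "finite {i. fscale c x i \<noteq> 0}" if "x \<in> Finf" for x :: "nat \<Rightarrow> 'k" and c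
    by (rule finite_subset[of _ "{i. x i \<noteq> 0}"]) (use that in \<open>auto simp: Finf_def\<close>)
  ultimately show ?thesis
    unfolding fs.subspace_def by (auto simp: Finf_def)
qed


lemma span_ev: "fs.span (ev ` J) = {z::nat \<Rightarrow> 'k::field. z \<in> Finf \<and> (\<forall>i. z i \<noteq> 0 \<longrightarrow> i \<in> J)}"
proof
  have sub: "fs.subspace {z::nat \<Rightarrow> 'k. z \<in> Finf \<and> (\<forall>i. z i \<noteq> 0 \<longrightarrow> i \<in> J)}"
    using Finf_subspace unfolding fs.subspace_def apply auto
    by (metis add.right_neutral)
  show "fs.span (ev ` J) \<subseteq> {z::nat \<Rightarrow> 'k. z \<in> Finf \<and> (\<forall>i. z i \<noteq> 0 \<longrightarrow> i \<in> J)}"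
    apply (rule fs.span_minimal)
    using sub apply (auto simp: ev_def Finf_def split: if_splits)
    done
next
  show "{z::nat \<Rightarrow> 'k. z \<in> Finf \<and> (\<forall>i. z i \<noteq> 0 \<longrightarrow> i \<in> J)} \<subseteq> fs.span (ev ` J)"
  proof clarify
    fix z :: "nat \<Rightarrow> 'k" assume z: "z \<in> Finf" "\<forall>i. z i \<noteq> 0 \<longrightarrow> i \<in> J"
    let ?S = "{i. z i \<noteq> 0}"
    have eq: "z = (\<Sum>i\<in>?S. fscale (z i) (ev i))"
    proof
      fix j
      show "z j = (\<Sum>i\<in>?S. fscale (z i) (ev i)) j"
        using finite_supp_Finf[OF z(1)]
        by (auto simp: sum_fun_apply ev_def if_distrib cong: if_cong)
    qed
    show "z \<in> fs.span (ev ` J)"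
      by (subst eq, rule fs.span_sum) (use z in \<open>auto intro: fs.span_scale fs.span_base\<close>)
  qed
qed

lemma Fn_char: "Fn n = {z::nat \<Rightarrow> 'k::field. \<forall>i\<ge>n. z i = 0}"
proof -
  have "Fn n = {z::nat \<Rightarrow> 'k. z \<in> Finf \<and> (\<forall>i. z i \<noteq> 0 \<longrightarrow> i \<in> {..<n})}"
    unfolding Fn_def by (rule span_ev)
  also have "\<dots> = {z. \<forall>i\<ge>n. z i = 0}"
  proof -
    have "finite {i. z i \<noteq> 0}" if "\<forall>i\<ge>n. z i = 0" for z :: "nat \<Rightarrow> 'k"
      by (rule finite_subset[of _ "{..<n}"]) (use that in \<open>auto simp: not_le[symmetric]\<close>)
    thus ?thesis apply (auto simp: Finf_def) using not_less by blast
  qed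
  finally show ?thesis .
qed

lemma Fn_Finf: "Fn n \<subseteq> Finf"
  unfolding Fn_def span_ev by auto

lemma Fn_subspace: "fs.subspace (Fn n)"
  unfolding Fn_def by simp

lemma finite_Fn: "finite (Fn n :: (nat \<Rightarrow> 'k::{field,finite}) set)"
proof -
  let ?h = "\<lambda>z::nat \<Rightarrow> 'k. map z [0..<n]"
  have inj: "inj_on ?h (Fn n)"
  proof
    fix x y :: "nat \<Rightarrow> 'k" assume xy: "x \<in> Fn n" "y \<in> Fn n" "?h x = ?h y"
    show "x = y"
    proof
      fix i show "x i = y i"
      proof (cases "i < n")
        case True
        then show ?thesis using xy(3) by (metis (no_types, lifting) map_eq_conv atLeastLessThan_iff set_upt zero_le)
      next
        case False
        then show ?thesis using xy(1,2) by (simp add: Fn_char)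
      qed
    qed
  qed
  have "?h ` Fn n \<subseteq> {xs. set xs \<subseteq> UNIV \<and> length xs = n}" by auto
  moreover have "finite {xs::'k list. set xs \<subseteq> UNIV \<and> length xs = n}"
    by (rule finite_lists_length_eq) simp
  ultimately have "finite (?h ` Fn n)" by (rule finite_subset)
  then show ?thesis using inj by (rule finite_imageD)
qed


lemma pair_alt: "finite S \<Longrightarrow> {i. u i \<noteq> 0} \<subseteq> S \<Longrightarrow> pair u v = (\<Sum>i\<in>S. u i * v i)"
  unfolding pair_def by (rule sum.mono_neutral_left) auto

lemma pair_Fn: "u \<in> Fn n \<Longrightarrow> pair u v = (\<Sum>i<n. u i * v i)"
  by (rule pair_alt) (auto simp: Fn_char not_less[symmetric])

lemma pair_Fn2: assumes "u \<in> Finf" "v \<in> Fn n" shows "pair u v = (\<Sum>i<n. u i * v i)"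
proof -
  have "pair u v = (\<Sum>i\<in>{i. u i \<noteq> 0} \<union> {..<n}. u i * v i)"
    by (rule pair_alt) (use assms in \<open>auto simp: Finf_def\<close>)
  also have "\<dots> = (\<Sum>i<n. u i * v i)"
    by (rule sum.mono_neutral_right) (use assms in \<open>auto simp: Finf_def Fn_char\<close>)
  finally show ?thesis .
qed

lemma pair_sym: assumes "u \<in> Finf" "v \<in> Finf" shows "pair u v = pair v u"
proof -
  let ?S = "{i. u i \<noteq> 0} \<union> {i. v i \<noteq> 0}"
  have "pair u v = (\<Sum>i\<in>?S. u i * v i)"
    by (rule pair_alt) (use assms in \<open>auto simp: Finf_def\<close>)
  moreover have "pair v u = (\<Sum>i\<in>?S. v i * u i)"
    by (rule pair_alt) (use assms in \<open>auto simp: Finf_def\<close>)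
  ultimately show ?thesis by (simp add: mult.commute)
qed

lemma pair_add2: "pair u (v + w) = pair u v + pair u w"
  by (simp add: pair_def distrib_left sum.distrib)

lemma pair_scale2: "pair u (fscale c v) = c * pair u v"
  by (simp add: pair_def sum_distrib_left algebra_simps)

lemma pair_zero2[simp]: "pair u 0 = 0"
  by (simp add: pair_def)

lemma pair_diff2: "pair u (v - w) = pair u v - pair u w"
  by (simp add: pair_def algebra_simps sum_subtractf)

lemma pair_sum2: "pair u (\<Sum>j\<in>A. F j) = (\<Sum>j\<in>A. pair u (F j))"
  unfolding pair_def sum_fun_apply by (simp add: sum_distrib_left sum.swap[of _ _ A])

lemma pair_ev1[simp]: "pair (ev i) (v :: nat \<Rightarrow> 'k::field) = v i"
proof -
  have "{j. (ev i :: nat \<Rightarrow> 'k) j \<noteq> 0} = {i}" by (auto simp: ev_def)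
  then show ?thesis by (simp add: pair_def ev_def)
qed

lemma ev_Finf: "(ev j :: nat \<Rightarrow> 'k::field) \<in> Finf"
proof -
  have "{i. (ev j :: nat \<Rightarrow> 'k) i \<noteq> 0} = {j}" by (auto simp: ev_def)
  then show ?thesis by (simp add: Finf_def)
qed

lemma pair_ev2: "u \<in> Finf \<Longrightarrow> pair u (ev j) = u j"
  by (subst pair_sym) (auto simp: ev_Finf)

lemma pair_add1: "u \<in> Finf \<Longrightarrow> u' \<in> Finf \<Longrightarrow> v \<in> Finf \<Longrightarrow> pair (u + u') v = pair u v + pair u' v"
  using Finf_subspace pair_sym pair_add2 unfolding fs.subspace_def by metis

lemma pair_scale1: "u \<in> Finf \<Longrightarrow> v \<in> Finf \<Longrightarrow> pair (fscale c u) v = c * pair u v"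
  using Finf_subspace pair_sym pair_scale2 unfolding fs.subspace_def by metis


lemma finite_sub_Fn: "S \<subseteq> Fn n \<Longrightarrow> finite (S :: (nat \<Rightarrow> 'k::{field,finite}) set)"
  using finite_Fn finite_subset by blast

lemma basis_Fn:
  fixes S :: "(nat \<Rightarrow> 'k::{field,finite}) set"
  assumes "S \<subseteq> Fn n"
  obtains B where "B \<subseteq> S" "fs.independent B" "S \<subseteq> fs.span B" "card B = fs.dim S" "finite B"
proof -
  obtain B where "B \<subseteq> S" "fs.independent B" "S \<subseteq> fs.span B" "card B = fs.dim S"
    using fs.basis_exists[of S] by blast
  moreover have "finite B" using \<open>B \<subseteq> S\<close> assms finite_sub_Fn by blast
  ultimately show ?thesis using that by blast
qed

lemma indep_card_le_dim:
  fixes B T :: "(nat \<Rightarrow> 'k::{field,finite}) set"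
  assumes "fs.independent B" "B \<subseteq> T" "T \<subseteq> Fn n"
  shows "card B \<le> fs.dim T"
proof -
  obtain C where C: "C \<subseteq> T" "fs.independent C" "T \<subseteq> fs.span C" "card C = fs.dim T" "finite C"
    using basis_Fn[OF assms(3)] by blast
  have "B \<subseteq> fs.span C" using assms(2) C(3) by blast
  from fs.independent_span_bound[OF C(5) assms(1) this] C(4) show ?thesis by simp
qed

lemma dim_mono_Fn:
  fixes S T :: "(nat \<Rightarrow> 'k::{field,finite}) set"
  assumes "S \<subseteq> T" "T \<subseteq> Fn n"
  shows "fs.dim S \<le> fs.dim T"
proof -
  have "S \<subseteq> Fn n" using assms by blast
  then obtain B where B: "B \<subseteq> S" "fs.independent B" "card B = fs.dim S"
    by (rule basis_Fn)
  have "card B \<le> fs.dim T"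
    by (rule indep_card_le_dim[OF B(2) _ assms(2)]) (use B(1) assms(1) in blast)
  then show ?thesis using B(3) by simp
qed

lemma subspace_eq_dim:
  fixes S T :: "(nat \<Rightarrow> 'k::{field,finite}) set"
  assumes "fs.subspace S" "S \<subseteq> T" "T \<subseteq> Fn n" "fs.dim T \<le> fs.dim S"
  shows "S = T"
proof (rule ccontr)
  assume ne: "S \<noteq> T"
  then obtain t where t: "t \<in> T" "t \<notin> S" using assms(2) by blast
  have "S \<subseteq> Fn n" using assms by blast
  then obtain B where B: "B \<subseteq> S" "fs.independent B" "S \<subseteq> fs.span B" "card B = fs.dim S" "finite B"
    by (rule basis_Fn)
  have spB: "fs.span B = S"
    by (rule fs.span_subspace[OF B(1) B(3) assms(1)])
  have "t \<notin> fs.span B" using spB t by simp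
  then have ind: "fs.independent (insert t B)" using B(2) by (rule fs.independent_insertI)
  have "insert t B \<subseteq> T" using B(1) t(1) assms(2) by blast
  from indep_card_le_dim[OF ind this assms(3)]
  have "card (insert t B) \<le> fs.dim T" .
  moreover have "t \<notin> B" using t B(1) by blast
  ultimately show False using B(4,5) assms(4) by simp
qed

lemma inj_ev: "inj_on (ev :: nat \<Rightarrow> nat \<Rightarrow> 'k::field) A"
proof (rule inj_onI)
  fix x y assume "(ev x :: nat \<Rightarrow> 'k) = ev y"
  then have "(ev x x :: 'k) = ev y x" by simp
  then show "x = y" by (simp add: ev_def split: if_splits)
qed

lemma dim_Fn: "fs.dim (Fn n :: (nat \<Rightarrow> 'k::{field,finite}) set) = n"
proof -
  have ind: "fs.independent (ev ` {..<n} :: (nat \<Rightarrow> 'k) set)"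
  proof (rule fs.independent_if_scalars_zero)
    show "finite (ev ` {..<n} :: (nat \<Rightarrow> 'k) set)" by simp
    fix f :: "(nat \<Rightarrow> 'k) \<Rightarrow> 'k" and x :: "nat \<Rightarrow> 'k"
    assume sum: "(\<Sum>x\<in>ev ` {..<n}. fscale (f x) x) = 0" and x: "x \<in> ev ` {..<n}"
    then obtain k where k: "k < n" "x = ev k" by blast
    have inj: "inj_on (ev :: nat \<Rightarrow> nat \<Rightarrow> 'k) {..<n}" by (rule inj_ev)
    have "0 = (\<Sum>x\<in>ev ` {..<n}. fscale (f x) x) k" using sum by simp
    also have "\<dots> = (\<Sum>j<n. f (ev j) * ev j k)"
      by (simp add: sum_fun_apply sum.reindex[OF inj])
    also have "\<dots> = f (ev k)"
      using k(1) by (simp add: ev_def if_distrib cong: if_cong)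
    finally show "f x = 0" using k by simp
  qed
  have inj: "inj_on (ev :: nat \<Rightarrow> nat \<Rightarrow> 'k) {..<n}" by (rule inj_ev)
  have "fs.dim (Fn n :: (nat \<Rightarrow> 'k) set) = card (ev ` {..<n} :: (nat \<Rightarrow> 'k) set)"
    unfolding Fn_def by (rule fs.dim_span_eq_card_independent[OF ind])
  also have "\<dots> = n" using card_image[OF inj] by simp
  finally show ?thesis .
qed

lemma dim_le_n: "S \<subseteq> Fn n \<Longrightarrow> fs.dim (S :: (nat \<Rightarrow> 'k::{field,finite}) set) \<le> n"
  using dim_mono_Fn[of S "Fn n" n] dim_Fn[where 'k='k] by simp


lemma pair_zero1[simp]: "pair 0 v = 0"
  by (simp add: pair_def)

lemma pair_diff1: assumes "u \<in> Finf" "u' \<in> Finf" "v \<in> Finf" shows "pair (u - u') v = pair u v - pair u' v"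
proof -
  have "u - u' \<in> Finf" using Finf_subspace assms(1,2) by (rule fs.subspace_diff)
  then have "pair (u - u') v = pair v (u - u')" using assms(3) by (rule pair_sym)
  also have "\<dots> = pair v u - pair v u'" by (rule pair_diff2)
  also have "\<dots> = pair u v - pair u' v" using assms pair_sym by metis
  finally show ?thesis .
qed

definition lperp :: "(nat \<Rightarrow> 'k::field) set \<Rightarrow> (nat \<Rightarrow> 'k) set \<Rightarrow> (nat \<Rightarrow> 'k) set" where
  "lperp A B = {z \<in> B. \<forall>s\<in>A. pair s z = 0}"

lemma Fn_sub: "x \<in> Fn n \<Longrightarrow> x \<in> Finf"
  using Fn_Finf by blast

lemma hyper:
  fixes A :: "(nat \<Rightarrow> 'k::{field,finite}) set"
  assumes A: "fs.subspace A" "A \<subseteq> Fn n" and w: "w \<in> A" and v: "v \<in> Fn n" and wv: "pair w v = 1"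
  shows "fs.dim A = Suc (fs.dim {u\<in>A. pair u v = 0})"
proof -
  let ?A1 = "{u\<in>A. pair u v = 0}"
  have fin: "x \<in> A \<Longrightarrow> x \<in> Finf" for x using A(2) Fn_Finf by blast
  have vF: "v \<in> Finf" using v Fn_Finf by blast
  have sub1: "fs.subspace ?A1"
    unfolding fs.subspace_def
  proof (intro conjI ballI allI)
    show "0 \<in> ?A1" using A(1) fs.subspace_0 by auto
    fix x y assume "x \<in> ?A1" "y \<in> ?A1"
    then have x: "x \<in> A" "pair x v = 0" and y: "y \<in> A" "pair y v = 0" by auto
    have "x + y \<in> A" using A(1) x(1) y(1) by (rule fs.subspace_add)
    moreover have "pair (x + y) v = 0" using pair_add1[OF fin[OF x(1)] fin[OF y(1)] vF] x y by simp
    ultimately show "x + y \<in> ?A1" by blast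
  next
    fix c x assume "x \<in> ?A1"
    then have x: "x \<in> A" "pair x v = 0" by auto
    have "fscale c x \<in> A" using A(1) x(1) by (rule fs.subspace_scale)
    moreover have "pair (fscale c x) v = 0" using pair_scale1[OF fin[OF x(1)] vF] x by simp
    ultimately show "fscale c x \<in> ?A1" by blast
  qed
  have "?A1 \<subseteq> Fn n" using A(2) by blast
  then obtain C where C: "C \<subseteq> ?A1" "fs.independent C" "?A1 \<subseteq> fs.span C" "card C = fs.dim ?A1" "finite C"
    by (rule basis_Fn)
  have spC: "fs.span C = ?A1" by (rule fs.span_subspace[OF C(1) C(3) sub1])
  have wn: "w \<notin> fs.span C" using spC wv by simp
  have ind: "fs.independent (insert w C)" using wn C(2) by (rule fs.independent_insertI)
  have wC: "w \<notin> C" using wn fs.span_base by blast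
  have "card (insert w C) = fs.dim A"
  proof (rule fs.basis_card_eq_dim)
    show "insert w C \<subseteq> A" using C(1) w by blast
    show "fs.independent (insert w C)" by (rule ind)
    show "A \<subseteq> fs.span (insert w C)"
    proof
      fix u assume u: "u \<in> A"
      let ?c = "pair u v"
      have u1: "u - fscale ?c w \<in> ?A1"
      proof -
        have "fscale ?c w \<in> A" using A(1) w fs.subspace_scale by blast
        then have "u - fscale ?c w \<in> A" using A(1) u fs.subspace_diff by blast
        moreover have "pair (u - fscale ?c w) v = 0"
          using pair_diff1[of u "fscale ?c w" v] pair_scale1[of w v ?c] fin[OF u] fin[OF w] vF wv
            \<open>fscale ?c w \<in> A\<close> fin by simp
        ultimately show ?thesis by blast
      qed
      have "u - fscale ?c w \<in> fs.span (insert w C)"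
        using u1 spC fs.span_mono[of C "insert w C"] by blast
      moreover have "fscale ?c w \<in> fs.span (insert w C)"
        by (rule fs.span_scale) (rule fs.span_base, simp)
      ultimately have "(u - fscale ?c w) + fscale ?c w \<in> fs.span (insert w C)"
        by (rule fs.span_add)
      then show "u \<in> fs.span (insert w C)" by simp
    qed
  qed
  then show ?thesis using C(4,5) wC by simp
qed


lemma sub_hyper:
  fixes A :: "(nat \<Rightarrow> 'k::field) set"
  assumes A: "fs.subspace A" "A \<subseteq> Finf" and v: "v \<in> Finf"
  shows "fs.subspace {u\<in>A. pair u v = 0}"
  unfolding fs.subspace_def
proof (intro conjI ballI allI)
  let ?A1 = "{u\<in>A. pair u v = 0}"
  have fin: "x \<in> A \<Longrightarrow> x \<in> Finf" for x using A(2) by blast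
  show "0 \<in> ?A1" using A(1) fs.subspace_0 by auto
  fix x y assume "x \<in> ?A1" "y \<in> ?A1"
  then have x: "x \<in> A" "pair x v = 0" and y: "y \<in> A" "pair y v = 0" by auto
  have "x + y \<in> A" using A(1) x(1) y(1) by (rule fs.subspace_add)
  moreover have "pair (x + y) v = 0" using pair_add1[OF fin[OF x(1)] fin[OF y(1)] v] x y by simp
  ultimately show "x + y \<in> ?A1" by blast
next
  let ?A1 = "{u\<in>A. pair u v = 0}"
  have fin: "x \<in> A \<Longrightarrow> x \<in> Finf" for x using A(2) by blast
  fix c x assume "x \<in> ?A1"
  then have x: "x \<in> A" "pair x v = 0" by auto
  have "fscale c x \<in> A" using A(1) x(1) by (rule fs.subspace_scale)
  moreover have "pair (fscale c x) v = 0" using pair_scale1[OF fin[OF x(1)] v] x by simp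
  ultimately show "fscale c x \<in> ?A1" by blast
qed

lemma perp_step:
  fixes A B :: "(nat \<Rightarrow> 'k::field) set"
  assumes A: "fs.subspace A" "A \<subseteq> Finf" and B: "B \<subseteq> Finf"
    and w: "w \<in> A" and v: "v \<in> B" and wv: "pair w v = 1"
  shows "lperp A B = lperp {u\<in>A. pair u v = 0} {y\<in>B. pair y w = 0}"
proof
  have wF: "w \<in> Finf" using w A by blast
  have vF: "v \<in> Finf" using v B by blast
  show "lperp A B \<subseteq> lperp {u\<in>A. pair u v = 0} {y\<in>B. pair y w = 0}"
  proof
    fix z assume z: "z \<in> lperp A B"
    then have zB: "z \<in> B" and zA: "\<forall>s\<in>A. pair s z = 0" by (auto simp: lperp_def)
    have "pair z w = pair w z" using zB B wF pair_sym by blast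
    also have "\<dots> = 0" using zA w by blast
    finally show "z \<in> lperp {u\<in>A. pair u v = 0} {y\<in>B. pair y w = 0}"
      using zB zA by (auto simp: lperp_def)
  qed
  show "lperp {u\<in>A. pair u v = 0} {y\<in>B. pair y w = 0} \<subseteq> lperp A B"
  proof
    fix z assume z: "z \<in> lperp {u\<in>A. pair u v = 0} {y\<in>B. pair y w = 0}"
    then have zB: "z \<in> B" and zw: "pair z w = 0" and zA1: "\<forall>s\<in>A. pair s v = 0 \<longrightarrow> pair s z = 0"
      by (auto simp: lperp_def)
    have zF: "z \<in> Finf" using zB B by blast
    have "pair s z = 0" if s: "s \<in> A" for s
    proof -
      let ?c = "pair s v"
      have sF: "s \<in> Finf" using s A by blast
      have cwA: "fscale ?c w \<in> A" using A(1) w by (rule fs.subspace_scale)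
      have cwF: "fscale ?c w \<in> Finf" using cwA A by blast
      have s1A: "s - fscale ?c w \<in> A" using A(1) s cwA by (rule fs.subspace_diff)
      have "pair (s - fscale ?c w) v = ?c - ?c * pair w v"
        using pair_diff1[OF sF cwF vF] pair_scale1[OF wF vF] by simp
      then have "pair (s - fscale ?c w) v = 0" using wv by simp
      then have p1: "pair (s - fscale ?c w) z = 0" using zA1 s1A by blast
      have wz: "pair w z = 0" using zw pair_sym[OF zF wF] by simp
      have "pair s z = pair (s - fscale ?c w) z + pair (fscale ?c w) z"
        using pair_diff1[OF sF cwF zF] by simp
      also have "\<dots> = 0" using p1 pair_scale1[OF wF zF] wz by simp
      finally show ?thesis .
    qed
    then show "z \<in> lperp A B" using zB by (auto simp: lperp_def)
  qed
qed

lemma lperp_sub: "lperp A B \<subseteq> B"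
  by (auto simp: lperp_def)

lemma lperp_subspace:
  fixes A B :: "(nat \<Rightarrow> 'k::field) set"
  assumes "fs.subspace B"
  shows "fs.subspace (lperp A B)"
  unfolding fs.subspace_def lperp_def
  using assms unfolding fs.subspace_def by (auto simp: pair_add2 pair_scale2)

lemma rank_eq:
  fixes A B :: "(nat \<Rightarrow> 'k::{field,finite}) set"
  assumes "fs.subspace A" "A \<subseteq> Fn n" "fs.subspace B" "B \<subseteq> Fn n"
  shows "fs.dim A + fs.dim (lperp A B) = fs.dim B + fs.dim (lperp B A)"
  using assms
proof (induction "fs.dim A + fs.dim B" arbitrary: A B rule: less_induct)
  case less
  show ?case
  proof (cases "\<exists>w\<in>A. \<exists>v\<in>B. pair w v \<noteq> 0")
    case False
    have AF: "A \<subseteq> Finf" and BF: "B \<subseteq> Finf" using less.prems Fn_Finf by blast+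
    have 1: "lperp A B = B" using False unfolding lperp_def by auto
    have "pair s z = 0" if "z \<in> A" "s \<in> B" for s z
      using False that pair_sym[of s z] AF BF by auto
    then have 2: "lperp B A = A" unfolding lperp_def by auto
    show ?thesis by (simp add: 1 2)
  next
    case True
    then obtain w0 v where w0: "w0 \<in> A" and v: "v \<in> B" and ne: "pair w0 v \<noteq> 0" by blast
    define w where "w = fscale (inverse (pair w0 v)) w0"
    have AF: "A \<subseteq> Finf" and BF: "B \<subseteq> Finf" using less.prems Fn_Finf by blast+
    have w: "w \<in> A" unfolding w_def using less.prems(1) w0 by (rule fs.subspace_scale)
    have "w0 \<in> Finf" "v \<in> Finf" using w0 v AF BF by blast+
    then have "pair w v = inverse (pair w0 v) * pair w0 v" unfolding w_def by (rule pair_scale1)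
    then have wv: "pair w v = 1" using ne by simp
    have vw: "pair v w = 1" using wv pair_sym w v AF BF by (metis subsetD)
    let ?A1 = "{u\<in>A. pair u v = 0}" and ?B1 = "{y\<in>B. pair y w = 0}"
    have dA: "fs.dim A = Suc (fs.dim ?A1)"
      by (rule hyper[OF less.prems(1,2) w _ wv]) (use v less.prems(4) in blast)
    have dB: "fs.dim B = Suc (fs.dim ?B1)"
      by (rule hyper[OF less.prems(3,4) v _ vw]) (use w less.prems(2) in blast)
    have e1: "lperp A B = lperp ?A1 ?B1"
      by (rule perp_step[OF less.prems(1) AF BF w v wv])
    have e2: "lperp B A = lperp ?B1 ?A1"
      by (rule perp_step[OF less.prems(3) BF AF v w vw])
    have s1: "fs.subspace ?A1" by (rule sub_hyper[OF less.prems(1) AF]) (use v BF in blast)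
    have s2: "fs.subspace ?B1" by (rule sub_hyper[OF less.prems(3) BF]) (use w AF in blast)
    have IH: "fs.dim ?A1 + fs.dim (lperp ?A1 ?B1) = fs.dim ?B1 + fs.dim (lperp ?B1 ?A1)"
      by (rule less.hyps) (use dA dB s1 s2 less.prems in auto)
    show ?thesis using IH dA dB e1 e2 by simp
  qed
qed


lemma subspace_ker2: "fs.subspace {s. pair (z :: nat \<Rightarrow> 'k::field) s = 0}"
  unfolding fs.subspace_def by (auto simp: pair_add2 pair_scale2)

lemma pair_span2: "(\<And>s. s \<in> X \<Longrightarrow> pair z s = 0) \<Longrightarrow> s \<in> fs.span X \<Longrightarrow> pair (z :: nat \<Rightarrow> 'k::field) s = 0"
  using fs.span_minimal[OF _ subspace_ker2, of X z] by blast

lemma span_Finf: "X \<subseteq> Finf \<Longrightarrow> fs.span X \<subseteq> (Finf :: (nat \<Rightarrow> 'k::field) set)"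
  using fs.span_minimal[OF _ Finf_subspace] by blast

lemma lperp_span:
  fixes X Z :: "(nat \<Rightarrow> 'k::field) set"
  assumes "X \<subseteq> Finf" "Z \<subseteq> Finf"
  shows "lperp (fs.span X) Z = lperp X Z"
proof
  show "lperp (fs.span X) Z \<subseteq> lperp X Z"
    using fs.span_superset[of X] unfolding lperp_def by blast
  show "lperp X Z \<subseteq> lperp (fs.span X) Z"
  proof
    fix z assume z: "z \<in> lperp X Z"
    then have zZ: "z \<in> Z" and zX: "\<forall>s\<in>X. pair s z = 0" by (auto simp: lperp_def)
    have zF: "z \<in> Finf" using zZ assms by blast
    have "pair z s = 0" if "s \<in> X" for s using zX that pair_sym[of z s] zF assms by auto
    then have "pair z s = 0" if "s \<in> fs.span X" for s using pair_span2 that by blast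
    then have "pair s z = 0" if "s \<in> fs.span X" for s
      using that pair_sym[of z s] zF span_Finf[OF assms(1)] by auto
    then show "z \<in> lperp (fs.span X) Z" using zZ by (auto simp: lperp_def)
  qed
qed

lemma lperp_Un: "lperp (X \<union> Y) Z = lperp X Z \<inter> lperp Y Z"
  by (auto simp: lperp_def)

lemma dim_zero: "fs.dim {0 :: nat \<Rightarrow> 'k::field} = 0"
  using fs.dim_le_card[of "{0 :: nat \<Rightarrow> 'k}" "{}"] by simp

lemma ann_dim:
  fixes S :: "(nat \<Rightarrow> 'k::{field,finite}) set"
  assumes "fs.subspace S" "S \<subseteq> Fn n"
  shows "fs.dim S + fs.dim (lperp S (Fn n)) = n"
proof -
  have "fs.dim S + fs.dim (lperp S (Fn n)) = fs.dim (Fn n :: (nat \<Rightarrow> 'k) set) + fs.dim (lperp (Fn n) S)"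
    by (rule rank_eq[OF assms Fn_subspace order_refl])
  moreover have "lperp (Fn n) S = {0}"
  proof
    show "{0} \<subseteq> lperp (Fn n) S" using assms(1) fs.subspace_0 by (auto simp: lperp_def)
    show "lperp (Fn n) S \<subseteq> {0}"
    proof
      fix z assume z: "z \<in> lperp (Fn n) S"
      then have zS: "z \<in> S" and zo: "\<forall>s\<in>Fn n. pair s z = 0" by (auto simp: lperp_def)
      have "z i = 0" for i
      proof (cases "i < n")
        case True
        then have "(ev i :: nat \<Rightarrow> 'k) \<in> Fn n" by (simp add: Fn_char ev_def)
        then show ?thesis using zo by fastforce
      next
        case False
        then show ?thesis using zS assms(2) by (auto simp: Fn_char)
      qed
      then show "z \<in> {0}" by auto
    qed
  qed
  ultimately show ?thesis by (simp add: dim_Fn dim_zero)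
qed

lemma double_perp:
  fixes S :: "(nat \<Rightarrow> 'k::{field,finite}) set"
  assumes "fs.subspace S" "S \<subseteq> Fn n"
  shows "lperp (lperp S (Fn n)) (Fn n) = S"
proof -
  let ?P = "lperp S (Fn n)"
  have sP: "fs.subspace ?P" by (rule lperp_subspace[OF Fn_subspace])
  have PF: "?P \<subseteq> Fn n" by (rule lperp_sub)
  have "S \<subseteq> lperp ?P (Fn n)"
  proof
    fix s assume s: "s \<in> S"
    have "pair p s = 0" if "p \<in> ?P" for p
    proof -
      have "pair s p = 0" using that s by (auto simp: lperp_def)
      moreover have "p \<in> Finf" "s \<in> Finf" using that s PF assms(2) Fn_Finf by blast+
      ultimately show ?thesis using pair_sym by metis
    qed
    then show "s \<in> lperp ?P (Fn n)" using s assms(2) by (auto simp: lperp_def)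
  qed
  moreover have "fs.dim (lperp ?P (Fn n)) \<le> fs.dim S"
    using ann_dim[OF assms] ann_dim[OF sP PF] by simp
  ultimately show ?thesis
    using subspace_eq_dim[OF assms(1) _ lperp_sub] by blast
qed


lemma exp_ev: "z \<in> Fn n \<Longrightarrow> z = (\<Sum>k<n. fscale (z k) (ev k :: nat \<Rightarrow> 'k::field))"
proof
  fix m assume z: "z \<in> Fn n"
  show "z m = (\<Sum>k<n. fscale (z k) (ev k :: nat \<Rightarrow> 'k)) m"
  proof (cases "m < n")
    case True
    then show ?thesis by (simp add: sum_fun_apply ev_def if_distrib cong: if_cong)
  next
    case False
    then show ?thesis using z by (auto simp: sum_fun_apply ev_def Fn_char)
  qed
qed

lemma ev_Fn: "i < n \<Longrightarrow> (ev i :: nat \<Rightarrow> 'k::field) \<in> Fn n"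
  by (simp add: Fn_char ev_def)

lemma nth_mid: "length xs \<le> i \<Longrightarrow> i < length xs + length ys \<Longrightarrow> (xs @ ys @ zs) ! i = ys ! (i - length xs)"
proof -
  assume h: "length xs \<le> i" "i < length xs + length ys"
  then have "i - length xs < length ys" by arith
  then show ?thesis using h by (simp add: nth_append)
qed

lemma construct:
  fixes W0 V0 :: "(nat \<Rightarrow> 'k::{field,finite}) set"
  assumes W0: "fs.subspace W0" "W0 \<subseteq> Fn n" and V0: "fs.subspace V0" "V0 \<subseteq> Fn n"
    and a: "a = fs.dim (lperp V0 W0)"
    and b: "b = fs.dim (lperp W0 V0)"
    and c: "c = fs.dim V0 - b"
  shows "\<exists>r f. (\<forall>i<n. r i \<in> Fn n) \<and> (\<forall>i<n. f i \<in> Fn n) \<and>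
    (\<forall>i<n. \<forall>j<n. pair (r i) (f j) = idm i j) \<and>
    (\<forall>i<n. \<forall>j<n. (\<Sum>k<n. f k i * r k j) = idm i j) \<and>
    V0 = fs.span (f ` {n-b-c..<n}) \<and>
    W0 = fs.span (r ` ({..<a} \<union> {n-c..<n})) \<and> a + b + c \<le> n"
proof -
  let ?P = "lperp W0 (Fn n)"
  have PF: "?P \<subseteq> Fn n" by (rule lperp_sub)
  have sP: "fs.subspace ?P" by (rule lperp_subspace[OF Fn_subspace])
  have KV: "lperp W0 V0 = V0 \<inter> ?P" using V0(2) by (auto simp: lperp_def)
  have rk: "fs.dim W0 + b = fs.dim V0 + a"
    using rank_eq[OF W0 V0] a b by simp
  have bV: "b \<le> fs.dim V0" unfolding b by (rule dim_mono_Fn[OF lperp_sub V0(2)])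
  have dV: "fs.dim V0 = b + c" using bV c by simp
  have dW: "fs.dim W0 = a + c" using rk dV by simp
  have dP: "fs.dim W0 + fs.dim ?P = n" by (rule ann_dim[OF W0])
  have "lperp W0 V0 \<subseteq> Fn n" using V0(2) lperp_sub by blast
  then obtain Y where Y: "Y \<subseteq> lperp W0 V0" "fs.independent Y" "lperp W0 V0 \<subseteq> fs.span Y"
      "card Y = b" "finite Y"
    unfolding b by (rule basis_Fn)
  have YV: "Y \<subseteq> V0" "Y \<subseteq> ?P" using Y(1) KV by blast+
  obtain B0 where B0: "Y \<subseteq> B0" "B0 \<subseteq> V0" "fs.independent B0" "V0 \<subseteq> fs.span B0"
    using fs.maximal_independent_subset_extend[OF YV(1) Y(2)] by blast
  have cB0: "card B0 = b + c" using fs.basis_card_eq_dim[OF B0(2,4,3)] dV by simp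
  have fB0: "finite B0" using B0(2) V0(2) finite_sub_Fn by blast
  have "B0 \<subseteq> B0 \<union> ?P" by blast
  then obtain B where B: "B0 \<subseteq> B" "B \<subseteq> B0 \<union> ?P" "fs.independent B" "B0 \<union> ?P \<subseteq> fs.span B"
    using fs.maximal_independent_subset_extend[OF _ B0(3)] by blast
  have BF: "B \<subseteq> Fn n" using B(2) B0(2) V0(2) PF by blast
  have fB: "finite B" using BF finite_sub_Fn by blast
  let ?U = "fs.span (V0 \<union> ?P)"
  have UF: "?U \<subseteq> Fn n" using V0(2) PF by (intro fs.span_minimal[OF _ Fn_subspace]) blast
  have cB: "card B = fs.dim ?U"
  proof (rule fs.basis_card_eq_dim)
    show "B \<subseteq> ?U" using B(2) B0(2) fs.span_superset[of "V0 \<union> ?P"] by blast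
    show "fs.independent B" by (rule B(3))
    have "V0 \<subseteq> fs.span B" using B0(4) fs.span_mono[OF B(1)] by blast
    then have "V0 \<union> ?P \<subseteq> fs.span B" using B(4) by blast
    then show "?U \<subseteq> fs.span B" by (intro fs.span_minimal) auto
  qed
  have "lperp ?U (Fn n) = lperp V0 (Fn n) \<inter> lperp ?P (Fn n)"
    using lperp_span[of "V0 \<union> ?P" "Fn n"] lperp_Un V0(2) PF Fn_Finf by blast
  also have "\<dots> = lperp V0 (Fn n) \<inter> W0" using double_perp[OF W0] by simp
  also have "\<dots> = lperp V0 W0" using W0(2) by (auto simp: lperp_def)
  finally have "fs.dim (lperp ?U (Fn n)) = a" using a by simp
  moreover have "fs.dim ?U + fs.dim (lperp ?U (Fn n)) = n" by (rule ann_dim[OF fs.subspace_span UF])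
  ultimately have cB': "card B = n - a" using cB by simp
  obtain B' where B': "B \<subseteq> B'" "B' \<subseteq> Fn n" "fs.independent B'" "Fn n \<subseteq> fs.span B'"
    using fs.maximal_independent_subset_extend[OF BF B(3)] by blast
  have cB'': "card B' = n" using fs.basis_card_eq_dim[OF B'(2,4,3)] dim_Fn by metis
  have fB'': "finite B'" using B'(2) finite_sub_Fn by blast
  have aln: "a \<le> n" using a dim_le_n[of "lperp V0 W0" n] lperp_sub W0(2) by blast
  have abc: "a + b + c \<le> n" using card_mono[OF fB B(1)] cB0 cB' aln by simp
  obtain LA where LA: "set LA = B' - B" "distinct LA" using finite_distinct_list[of "B' - B"] fB'' by blast
  obtain LM where LM: "set LM = B - B0" "distinct LM" using finite_distinct_list[of "B - B0"] fB by blast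
  obtain LY where LY: "set LY = Y" "distinct LY" using finite_distinct_list[OF Y(5)] by blast
  obtain LV where LV: "set LV = B0 - Y" "distinct LV" using finite_distinct_list[of "B0 - Y"] fB0 by blast
  have lA: "length LA = a" using LA distinct_card[OF LA(2)] card_Diff_subset[OF fB B'(1)] cB'' cB' aln
    by simp
  have lM: "length LM = n - a - b - c" using LM distinct_card[OF LM(2)] card_Diff_subset[OF fB0 B(1)] cB0 cB'
    by simp
  have lY: "length LY = b" using LY distinct_card[OF LY(2)] Y(4) by simp
  have lV: "length LV = c" using LV distinct_card[OF LV(2)] card_Diff_subset[OF Y(5) B0(1)] cB0 Y(4) by simp
  define L where "L = LA @ LM @ LY @ LV"
  have dL: "distinct L" unfolding L_def using LA LM LY LV B(1) B0(1) by auto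
  have sL: "set L = B'" unfolding L_def using LA LM LY LV B(1) B'(1) B0(1) by auto
  have lL: "length L = n" unfolding L_def using lA lM lY lV abc by simp
  define f where "f i = L ! i" for i
  have fmem: "f i \<in> B'" if "i < n" for i using that sL lL nth_mem unfolding f_def by metis
  have finj: "inj_on f {..<n}" unfolding f_def using dL lL by (auto simp: inj_on_def nth_eq_iff_index_eq)
  have fimg: "f ` {..<n} = B'" unfolding f_def using sL lL by (auto simp: set_conv_nth)
  have fP: "f i \<in> ?P" if "a \<le> i" "i < n - c" for i
  proof -
    have eq: "L = LA @ (LM @ LY) @ LV" unfolding L_def by simp
    have "f i = (LM @ LY) ! (i - length LA)" unfolding f_def
      by (subst eq, rule nth_mid) (use that lA lM lY lV abc in auto)
    then have "f i = (LM @ LY) ! (i - a)" using lA by simp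
    moreover have "i - a < length (LM @ LY)" using that lM lY abc by simp
    ultimately have "f i \<in> set (LM @ LY)" by (metis nth_mem)
    then show ?thesis using LM LY YV B(2) by auto
  qed
  have fV: "f i \<in> B0" if "n - b - c \<le> i" "i < n" for i
  proof -
    have eq: "L = (LA @ LM) @ (LY @ LV) @ []" unfolding L_def by simp
    have "f i = (LY @ LV) ! (i - length (LA @ LM))" unfolding f_def
      by (subst eq, rule nth_mid) (use that lA lM lY lV abc in auto)
    then have "f i = (LY @ LV) ! (i - (n - b - c))" using lA lM abc by simp
    moreover have "i - (n - b - c) < length (LY @ LV)" using that lY lV abc by simp
    ultimately have "f i \<in> set (LY @ LV)" by (metis nth_mem)
    then show ?thesis using LY LV B0(1) by auto
  qed
  define r where "r i = (\<lambda>k. if k < n then fs.representation B' (ev k) (f i) else 0)" for i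
  have rF: "r i \<in> Fn n" for i unfolding r_def by (simp add: Fn_char)
  have spB': "z \<in> fs.span B'" if "z \<in> Fn n" for z using that B'(4) by blast
  have key: "pair (r i) z = fs.representation B' z (f i)" if z: "z \<in> Fn n" for z i
  proof -
    have "pair (r i) z = (\<Sum>k<n. r i k * z k)" by (rule pair_Fn[OF rF])
    also have "\<dots> = (\<Sum>k<n. z k * fs.representation B' (ev k) (f i))"
      unfolding r_def by (simp add: mult.commute)
    also have "\<dots> = fs.representation B' (\<Sum>k<n. fscale (z k) (ev k)) (f i)"
    proof -
      have "fs.representation B' (\<Sum>k<n. fscale (z k) (ev k)) = (\<lambda>b. \<Sum>k<n. fs.representation B' (fscale (z k) (ev k)) b)"
        by (rule fs.representation_sum[OF B'(3)], rule fs.span_scale, rule spB', rule ev_Fn, simp)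
      also have "\<dots> = (\<lambda>b. \<Sum>k<n. z k * fs.representation B' (ev k) b)"
        by (intro ext sum.cong refl, subst fs.representation_scale[OF B'(3)]) (auto intro!: spB' ev_Fn)
      finally show ?thesis by simp
    qed
    also have "\<dots> = fs.representation B' z (f i)" using exp_ev[OF z] by simp
    finally show ?thesis .
  qed
  have P2: "pair (r i) (f j) = idm i j" if "i < n" "j < n" for i j
  proof -
    have "pair (r i) (f j) = fs.representation B' (f j) (f i)"
      by (rule key) (use fmem that B'(2) in blast)
    also have "\<dots> = (if f i = f j then 1 else 0)"
      using fs.representation_basis[OF B'(3) fmem[OF that(2)]] by simp
    also have "\<dots> = idm i j" using finj that by (auto simp: idm_def inj_on_def)
    finally show ?thesis .
  qed
  have P3: "(\<Sum>k<n. f k m * r k j) = idm m j" if "m < n" "j < n" for m j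
  proof -
    have evj: "(ev j :: nat \<Rightarrow> 'k) \<in> Fn n" by (rule ev_Fn[OF that(2)])
    have "ev j = (\<Sum>b\<in>B'. fscale (fs.representation B' (ev j) b) b)"
      by (rule fs.sum_representation_eq[OF B'(3) spB'[OF evj] fB'' order_refl, symmetric])
    also have "\<dots> = (\<Sum>k<n. fscale (fs.representation B' (ev j) (f k)) (f k))"
      using sum.reindex[OF finj, of "\<lambda>b. fscale (fs.representation B' (ev j) b) b"] fimg by simp
    also have "\<dots> = (\<Sum>k<n. fscale (r k j) (f k))"
    proof (rule sum.cong[OF refl])
      fix k assume "k \<in> {..<n}"
      have "r k \<in> Finf" using rF Fn_Finf by blast
      then have "r k j = pair (r k) (ev j)" using pair_ev2[of "r k" j] by simp
      also have "\<dots> = fs.representation B' (ev j) (f k)" by (rule key[OF evj])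
      finally show "fscale (fs.representation B' (ev j) (f k)) (f k) = fscale (r k j) (f k)" by simp
    qed
    finally have "ev j m = (\<Sum>k<n. fscale (r k j) (f k)) m" by simp
    then show ?thesis by (simp add: sum_fun_apply ev_def idm_def mult.commute)
  qed
  have img: "f ` {n-b-c..<n} = B0"
  proof (rule card_subset_eq[OF fB0])
    show "f ` {n-b-c..<n} \<subseteq> B0" using fV by auto
    have "inj_on f {n-b-c..<n}" using finj by (rule inj_on_subset) auto
    then have "card (f ` {n-b-c..<n}) = card {n-b-c..<n}" by (rule card_image)
    then show "card (f ` {n-b-c..<n}) = card B0" using cB0 abc by simp
  qed
  have P4: "V0 = fs.span (f ` {n-b-c..<n})"
    unfolding img using fs.span_subspace[OF B0(2,4) V0(1)] by simp
  let ?I = "{..<a} \<union> {n-c..<n}"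
  have spF: "fs.span (r ` ?I) \<subseteq> Fn n"
    by (rule fs.span_minimal[OF _ Fn_subspace]) (use rF in auto)
  have Wsub: "W0 \<subseteq> fs.span (r ` ?I)"
  proof
    fix u assume u: "u \<in> W0"
    have uF: "u \<in> Fn n" using u W0(2) by blast
    have expn: "u = (\<Sum>i<n. fscale (pair u (f i)) (r i))"
    proof
      fix m
      show "u m = (\<Sum>i<n. fscale (pair u (f i)) (r i)) m"
      proof (cases "m < n")
        case True
        have "(\<Sum>i<n. fscale (pair u (f i)) (r i)) m = (\<Sum>i<n. (\<Sum>k<n. u k * f i k) * r i m)"
          by (simp add: sum_fun_apply pair_Fn[OF uF])
        also have "\<dots> = (\<Sum>i<n. \<Sum>k<n. u k * (f i k * r i m))"
          unfolding sum_distrib_right by (simp only: mult.assoc)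
        also have "\<dots> = (\<Sum>k<n. \<Sum>i<n. u k * (f i k * r i m))"
          by (rule sum.swap)
        also have "\<dots> = (\<Sum>k<n. u k * (\<Sum>i<n. f i k * r i m))"
          unfolding sum_distrib_left ..
        also have "\<dots> = (\<Sum>k<n. u k * idm k m)"
          using P3 True by simp
        also have "\<dots> = u m" using True by (simp add: idm_def if_distrib cong: if_cong)
        finally show ?thesis by simp
      next
        case False
        then show ?thesis using uF rF by (simp add: sum_fun_apply Fn_char)
      qed
    qed
    have "(\<Sum>i<n. fscale (pair u (f i)) (r i)) \<in> fs.span (r ` ?I)"
    proof (rule fs.span_sum)
      fix i assume i: "i \<in> {..<n}"
      show "fscale (pair u (f i)) (r i) \<in> fs.span (r ` ?I)"
      proof (cases "i \<in> ?I")
        case True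
        then show ?thesis by (intro fs.span_scale fs.span_base) auto
      next
        case False
        then have "a \<le> i" "i < n - c" using i by auto
        then have "f i \<in> ?P" by (rule fP)
        then have "pair u (f i) = 0" using u by (auto simp: lperp_def)
        then show ?thesis using fs.span_zero by (simp add: fscale_def zero_fun_def)
      qed
    qed
    then show "u \<in> fs.span (r ` ?I)" using expn by simp
  qed
  have cI: "card ?I = a + c" using abc by (subst card_Un_disjoint) auto
  have "fs.dim (fs.span (r ` ?I)) \<le> card (r ` ?I)"
    by (rule fs.dim_le_card) auto
  also have "\<dots> \<le> card ?I" by (rule card_image_le) simp
  finally have "fs.dim (fs.span (r ` ?I)) \<le> fs.dim W0" using cI dW by simp
  then have P5: "W0 = fs.span (r ` ?I)"
    by (rule subspace_eq_dim[OF W0(1) Wsub spF])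
  show ?thesis
  proof (rule exI[of _ r], rule exI[of _ f], intro conjI allI impI)
    show "r i \<in> Fn n" for i by (rule rF)
    show "f i \<in> Fn n" if "i < n" for i using fmem[OF that] B'(2) by blast
    show "pair (r i) (f j) = idm i j" if "i < n" "j < n" for i j using P2 that by blast
    show "(\<Sum>k<n. f k i * r k j) = idm i j" if "i < n" "j < n" for i j using P3 that by blast
    show "V0 = fs.span (f ` {n-b-c..<n})" by (rule P4)
    show "W0 = fs.span (r ` ?I)" by (rule P5)
    show "a + b + c \<le> n" by (rule abc)
  qed
qed



definition blk :: "nat \<Rightarrow> (nat \<Rightarrow> nat \<Rightarrow> 'k::field) \<Rightarrow> nat \<Rightarrow> nat \<Rightarrow> 'k" where
  "blk n A = (\<lambda>i j. if i < n \<and> j < n then A i j else idm i j)"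

lemma mmult_alt: "finite S \<Longrightarrow> {k. g i k \<noteq> 0} \<subseteq> S \<Longrightarrow> mmult g h i j = (\<Sum>k\<in>S. g i k * h k j)"
  unfolding mmult_def by (rule sum.mono_neutral_left) auto

lemma mvec_alt: "finite S \<Longrightarrow> {k. v k \<noteq> 0} \<subseteq> S \<Longrightarrow> mvec g v i = (\<Sum>k\<in>S. g i k * v k)"
  unfolding mvec_def by (rule sum.mono_neutral_left) auto

lemma idm_sym: "idm i j = idm j i"
  by (simp add: idm_def)

lemma sum_idm_right: "finite S \<Longrightarrow> j \<in> S \<Longrightarrow> (\<Sum>k\<in>S. h k * idm k j) = (h j :: 'k::field)"
proof -
  assume "finite S" "j \<in> S"
  have "(\<Sum>k\<in>S. h k * idm k j) = (\<Sum>k\<in>S. if k = j then h k else 0)"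
    by (rule sum.cong) (auto simp: idm_def)
  then show ?thesis using \<open>finite S\<close> \<open>j \<in> S\<close> by (simp add: sum.delta')
qed

lemma sum_idm_left: "finite S \<Longrightarrow> i \<in> S \<Longrightarrow> (\<Sum>k\<in>S. idm i k * h k) = (h i :: 'k::field)"
proof -
  assume "finite S" "i \<in> S"
  have "(\<Sum>k\<in>S. idm i k * h k) = (\<Sum>k\<in>S. if i = k then h k else 0)"
    by (rule sum.cong) (auto simp: idm_def)
  then show ?thesis using \<open>finite S\<close> \<open>i \<in> S\<close> by (simp add: sum.delta)
qed

lemma mmult_blk: "mmult (blk n A) (blk n B) = blk n (\<lambda>i j. \<Sum>k<n. A i k * B k j)"
proof (intro ext)
  fix i j
  show "mmult (blk n A) (blk n B) i j = blk n (\<lambda>i j. \<Sum>k<n. A i k * B k j) i j"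
  proof (cases "i < n")
    case True
    have "mmult (blk n A) (blk n B) i j = (\<Sum>k<n. blk n A i k * blk n B k j)"
      by (rule mmult_alt) (use True in \<open>auto simp: blk_def idm_def not_less[symmetric]\<close>)
    also have "\<dots> = (\<Sum>k<n. A i k * blk n B k j)" using True by (intro sum.cong) (auto simp: blk_def)
    also have "\<dots> = blk n (\<lambda>i j. \<Sum>k<n. A i k * B k j) i j"
      using True by (cases "j < n") (auto simp: blk_def idm_def)
    finally show ?thesis .
  next
    case False
    have "mmult (blk n A) (blk n B) i j = (\<Sum>k\<in>{i}. blk n A i k * blk n B k j)"
      by (rule mmult_alt) (use False in \<open>auto simp: blk_def idm_def\<close>)
    also have "\<dots> = blk n (\<lambda>i j. \<Sum>k<n. A i k * B k j) i j"
      using False by (simp add: blk_def idm_def)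
    finally show ?thesis .
  qed
qed

lemma mvec_blk:
  assumes "v \<in> Finf"
  shows "mvec (blk n A) v = (\<lambda>i. if i < n then (\<Sum>k<n. A i k * v k) else v i)"
proof
  fix i
  let ?S = "{k. v k \<noteq> 0} \<union> {..<n} \<union> {i}"
  have fS: "finite ?S" using assms by (simp add: Finf_def)
  have e: "mvec (blk n A) v i = (\<Sum>k\<in>?S. blk n A i k * v k)"
    by (rule mvec_alt[OF fS]) auto
  show "mvec (blk n A) v i = (if i < n then (\<Sum>k<n. A i k * v k) else v i)"
  proof (cases "i < n")
    case True
    have "(\<Sum>k\<in>?S. blk n A i k * v k) = (\<Sum>k<n. blk n A i k * v k)"
      by (rule sum.mono_neutral_right[OF fS]) (use True in \<open>auto simp: blk_def idm_def\<close>)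
    also have "\<dots> = (\<Sum>k<n. A i k * v k)" using True by (intro sum.cong) (auto simp: blk_def)
    finally show ?thesis using e True by simp
  next
    case False
    have "(\<Sum>k\<in>?S. blk n A i k * v k) = (\<Sum>k\<in>?S. idm i k * v k)"
      using False by (intro sum.cong) (auto simp: blk_def)
    also have "\<dots> = v i" by (rule sum_idm_left[OF fS]) simp
    finally show ?thesis using e False by simp
  qed
qed

lemma mtrans_blk: "mtrans (blk n A) = blk n (\<lambda>i j. A j i)"
  by (auto simp: mtrans_def blk_def idm_def intro!: ext)

lemma finid_blk: "finid (blk n A)"
proof -
  have "{(i, j). blk n A i j \<noteq> idm i j} \<subseteq> {..<n} \<times> {..<n}" by (auto simp: blk_def)
  then show ?thesis unfolding finid_def by (rule finite_subset) simp
qed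

lemma blk_idm: "blk n (\<lambda>i j. idm i j) = (idm :: nat \<Rightarrow> nat \<Rightarrow> 'k::field)"
  by (auto simp: blk_def intro!: ext)

lemma blk_cong: "(\<And>i j. i < n \<Longrightarrow> j < n \<Longrightarrow> A i j = B i j) \<Longrightarrow> blk n A = blk n B"
  by (auto simp: blk_def intro!: ext)

lemma blk_blk: "blk n (blk n A) = blk n A"
  by (auto simp: blk_def intro!: ext)

lemma mmult_blk_assoc:
  "mmult (mmult (blk n A) (blk n B)) (blk n C) = mmult (blk n A) (mmult (blk n B) (blk n C))"
proof -
  have "(\<Sum>l<n. (\<Sum>k<n. A i k * B k l) * C l j) = (\<Sum>k<n. A i k * (\<Sum>l<n. B k l * C l j))" for i j
  proof -
    have "(\<Sum>l<n. (\<Sum>k<n. A i k * B k l) * C l j) = (\<Sum>l<n. \<Sum>k<n. A i k * (B k l * C l j))"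
      unfolding sum_distrib_right by (simp only: mult.assoc)
    also have "\<dots> = (\<Sum>k<n. \<Sum>l<n. A i k * (B k l * C l j))" by (rule sum.swap)
    also have "\<dots> = (\<Sum>k<n. A i k * (\<Sum>l<n. B k l * C l j))" unfolding sum_distrib_left ..
    finally show ?thesis .
  qed
  then show ?thesis by (simp add: mmult_blk)
qed

definition isblk :: "nat \<Rightarrow> (nat \<Rightarrow> nat \<Rightarrow> 'k::field) \<Rightarrow> bool" where
  "isblk n M \<longleftrightarrow> blk n M = M"

lemma isblk_mmult: "isblk n M \<Longrightarrow> isblk n N \<Longrightarrow> isblk n (mmult M N)"
proof -
  assume h: "isblk n M" "isblk n N"
  then have "mmult M N = mmult (blk n M) (blk n N)" by (simp add: isblk_def)
  also have "\<dots> = blk n (\<lambda>i j. \<Sum>k<n. M i k * N k j)" by (rule mmult_blk)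
  finally show ?thesis by (simp add: isblk_def blk_blk)
qed

lemma isblk_assoc: "isblk n M \<Longrightarrow> isblk n N \<Longrightarrow> isblk n K \<Longrightarrow> mmult (mmult M N) K = mmult M (mmult N K)"
  unfolding isblk_def by (metis mmult_blk_assoc)

lemma isblk_idm: "isblk n idm"
  unfolding isblk_def by (rule blk_idm)

lemma isblk_blk: "isblk n (blk n A)"
  unfolding isblk_def by (rule blk_blk)

lemma mmult_idm_left: "mmult idm M = M"
proof (intro ext)
  fix i j
  have "mmult idm M i j = (\<Sum>k\<in>{i}. idm i k * M k j)" by (rule mmult_alt) (auto simp: idm_def)
  then show "mmult idm M i j = M i j" by (simp add: idm_def)
qed

lemma mmult_idm_right_blk: "isblk n M \<Longrightarrow> mmult M idm = M"
proof -
  assume h: "isblk n M"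
  then have "mmult M idm = mmult (blk n M) (blk n (\<lambda>i j. idm i j))" by (simp add: isblk_def blk_idm)
  also have "\<dots> = blk n (\<lambda>i j. \<Sum>k<n. M i k * idm k j)" by (rule mmult_blk)
  also have "\<dots> = blk n M" by (rule blk_cong) (simp add: sum_idm_right)
  finally show ?thesis using h by (simp add: isblk_def)
qed


lemma isblk_out: "isblk n M \<Longrightarrow> (n \<le> i \<or> n \<le> j) \<Longrightarrow> M i j = idm i j"
  unfolding isblk_def by (metis blk_def not_le)

lemma isblk_row: assumes "isblk n M" shows "{l. M k l \<noteq> 0} \<subseteq> {..<n} \<union> {k}"
proof
  fix l assume l: "l \<in> {l. M k l \<noteq> 0}"
  show "l \<in> {..<n} \<union> {k}"
  proof (rule ccontr)
    assume "l \<notin> {..<n} \<union> {k}"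
    then have "n \<le> l" "l \<noteq> k" by auto
    then have "M k l = 0" using isblk_out[OF assms, of k l] by (simp add: idm_def)
    then show False using l by simp
  qed
qed

lemma finid_row: assumes "finid h" shows "finite {k. h i k \<noteq> 0}"
proof -
  let ?D = "{(i, j). h i j \<noteq> idm i j}"
  have "{k. h i k \<noteq> 0} \<subseteq> snd ` ?D \<union> {i}"
  proof
    fix k assume k: "k \<in> {k. h i k \<noteq> 0}"
    show "k \<in> snd ` ?D \<union> {i}"
    proof (cases "k = i")
      case False
      then have "(i, k) \<in> ?D" using k by (auto simp: idm_def)
      then show ?thesis by force
    qed simp
  qed
  moreover have "finite (snd ` ?D \<union> {i})" using assms by (simp add: finid_def)
  ultimately show ?thesis by (rule finite_subset)
qed

lemma assoc_row:
  assumes S: "finite S" "{k. h i k \<noteq> 0} \<subseteq> S" and T: "finite T" "\<And>k. k \<in> S \<Longrightarrow> {l. g k l \<noteq> 0} \<subseteq> T"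
  shows "mmult h (mmult g q) i j = mmult (mmult h g) q i j"
proof -
  have "mmult h (mmult g q) i j = (\<Sum>k\<in>S. h i k * mmult g q k j)" by (rule mmult_alt[where g=h and i=i, OF S(1) S(2)])
  also have "\<dots> = (\<Sum>k\<in>S. h i k * (\<Sum>l\<in>T. g k l * q l j))"
    by (intro sum.cong refl) (simp add: mmult_alt[OF T(1) T(2)])
  also have "\<dots> = (\<Sum>l\<in>T. (\<Sum>k\<in>S. h i k * g k l) * q l j)"
  proof -
    have "(\<Sum>k\<in>S. h i k * (\<Sum>l\<in>T. g k l * q l j)) = (\<Sum>k\<in>S. \<Sum>l\<in>T. h i k * g k l * q l j)"
      unfolding sum_distrib_left by (simp only: mult.assoc)
    also have "\<dots> = (\<Sum>l\<in>T. \<Sum>k\<in>S. h i k * g k l * q l j)" by (rule sum.swap)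
    also have "\<dots> = (\<Sum>l\<in>T. (\<Sum>k\<in>S. h i k * g k l) * q l j)" unfolding sum_distrib_right ..
    finally show ?thesis .
  qed
  also have "\<dots> = (\<Sum>l\<in>T. mmult h g i l * q l j)"
    by (intro sum.cong refl) (simp add: mmult_alt[where g=h and i=i, OF S(1) S(2)])
  also have "\<dots> = mmult (mmult h g) q i j"
  proof (rule mmult_alt[OF T(1), symmetric])
    show "{l. mmult h g i l \<noteq> 0} \<subseteq> T"
    proof
      fix l assume l: "l \<in> {l. mmult h g i l \<noteq> 0}"
      show "l \<in> T"
      proof (rule ccontr)
        assume "l \<notin> T"
        then have "\<And>k. k \<in> S \<Longrightarrow> g k l = 0" using T(2) by blast
        then have "mmult h g i l = 0" by (simp add: mmult_alt[where g=h and i=i, OF S(1) S(2)])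
        then show False using l by simp
      qed
    qed
  qed
  finally show ?thesis .
qed

lemma minv_blk:
  assumes x: "isblk n x" and y: "isblk n y" and xy: "mmult x y = idm" and yx: "mmult y x = idm"
  shows "minv x = y"
  unfolding minv_def
proof (rule the_equality)
  show "finid y \<and> mmult x y = idm \<and> mmult y x = idm"
    using y xy yx finid_blk[of n y] by (simp add: isblk_def)
next
  fix h assume h: "finid h \<and> mmult x h = idm \<and> mmult h x = idm"
  show "h = y"
  proof (intro ext)
    fix i j
    let ?S = "{k. h i k \<noteq> 0}"
    have fS: "finite ?S" using h finid_row by blast
    have "h i j = mmult h idm i j"
      by (subst mmult_alt[of "?S \<union> {j}"]) (use fS in \<open>auto simp: sum_idm_right\<close>)
    also have "\<dots> = mmult h (mmult x y) i j" using xy by simp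
    also have "\<dots> = mmult (mmult h x) y i j"
      by (rule assoc_row[of ?S h i "{..<n} \<union> ?S"]) (use fS isblk_row[OF x] in auto)
    also have "\<dots> = y i j" using h by (simp add: mmult_idm_left)
    finally show "h i j = y i j" .
  qed
qed

lemma GLn_blk:
  assumes x: "isblk n x" and y: "isblk n y" and xy: "mmult x y = idm" and yx: "mmult y x = idm"
  shows "x \<in> GLn n"
  unfolding GLn_def GLinf_def
  using finid_blk[of n x] finid_blk[of n y] x y xy yx isblk_out[OF x] by (auto simp: isblk_def)

lemma GLn_isblk: "g \<in> GLn n \<Longrightarrow> isblk n g"
  unfolding GLn_def isblk_def blk_def by (auto intro!: ext)

lemma GLn_inv:
  assumes g: "g \<in> GLn n"
  shows "\<exists>h. isblk n h \<and> mmult g h = idm \<and> mmult h g = idm"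
proof -
  obtain h where h: "finid h" "mmult g h = idm" "mmult h g = idm"
    using g unfolding GLn_def GLinf_def by blast
  have gout: "g i j = idm i j" if "n \<le> i \<or> n \<le> j" for i j using g that unfolding GLn_def by blast
  have "h i j = idm i j" if "n \<le> i \<or> n \<le> j" for i j
    using that
  proof
    assume i: "n \<le> i"
    have "mmult g h i j = (\<Sum>k\<in>{i}. g i k * h k j)"
      by (rule mmult_alt) (use gout i in \<open>auto simp: idm_def\<close>)
    then have "mmult g h i j = h i j" using gout i by (simp add: idm_def)
    then show ?thesis using h(2) by simp
  next
    assume j: "n \<le> j"
    let ?S = "{k. h i k \<noteq> 0} \<union> {j}"
    have fS: "finite ?S" using h(1) finid_row by blast
    have "mmult h g i j = (\<Sum>k\<in>?S. h i k * g k j)"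
      by (rule mmult_alt[OF fS]) auto
    also have "\<dots> = (\<Sum>k\<in>?S. h i k * idm k j)" using gout j by simp
    also have "\<dots> = h i j" by (rule sum_idm_right[OF fS]) simp
    finally show ?thesis using h(3) by simp
  qed
  then have "isblk n h" unfolding isblk_def blk_def by (auto intro!: ext simp: not_less)
  then show ?thesis using h by blast
qed


definition tl_vec :: "nat \<Rightarrow> (nat \<Rightarrow> 'k::field) \<Rightarrow> nat \<Rightarrow> 'k" where
  "tl_vec n v = (\<lambda>i. if n \<le> i then v i else 0)"

lemma tl_vec_U:
  fixes U :: "(nat \<Rightarrow> 'k::field) set"
  assumes "fs.subspace U" "\<forall>i\<ge>n. ev i \<in> U" "v \<in> Finf"
  shows "tl_vec n v \<in> U"
proof -
  have "tl_vec n v \<in> fs.span (ev ` {n..})"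
  proof -
    have "finite {i. tl_vec n v i \<noteq> 0}"
      by (rule finite_subset[of _ "{i. v i \<noteq> 0}"]) (use assms(3) in \<open>auto simp: tl_vec_def Finf_def\<close>)
    then show ?thesis unfolding span_ev by (auto simp: tl_vec_def Finf_def split: if_splits)
  qed
  moreover have "fs.span (ev ` {n..}) \<subseteq> U"
    by (rule fs.span_minimal[OF _ assms(1)]) (use assms(2) in auto)
  ultimately show ?thesis by blast
qed

lemma pair_tl: "u \<in> Fn n \<Longrightarrow> pair u (tl_vec n v) = 0"
  by (simp add: pair_Fn tl_vec_def)

lemma img:
  fixes p q :: "nat \<Rightarrow> nat \<Rightarrow> 'k::field" and U :: "(nat \<Rightarrow> 'k) set" and J :: "nat set"
  assumes pF: "\<forall>i<n. p i \<in> Fn n" and qF: "\<forall>i<n. q i \<in> Fn n"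
    and pq: "\<forall>i<n. \<forall>j<n. pair (p i) (q j) = idm i j"
    and J: "J \<subseteq> {..<n}"
    and U: "fs.subspace U" "U \<subseteq> Finf" "\<forall>i\<ge>n. ev i \<in> U" "U \<inter> Fn n = fs.span (q ` J)"
  shows "mvec (blk n (\<lambda>i k. p i k)) ` U = {z \<in> Finf. \<forall>i<n. i \<notin> J \<longrightarrow> z i = 0}"
proof -
  have mv: "mvec (blk n (\<lambda>i k. p i k)) v = (\<lambda>i. if i < n then pair (p i) v else v i)" if "v \<in> Finf" for v
    using mvec_blk[OF that, of n "\<lambda>i k. p i k"] pF by (auto simp: pair_Fn intro!: ext)
  have spU: "fs.span (q ` J) \<subseteq> U" using U(4) by blast
  show ?thesis
  proof
    show "mvec (blk n (\<lambda>i k. p i k)) ` U \<subseteq> {z \<in> Finf. \<forall>i<n. i \<notin> J \<longrightarrow> z i = 0}"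
    proof
      fix x :: "nat \<Rightarrow> 'k" assume "x \<in> mvec (blk n (\<lambda>i k. p i k)) ` U"
      then obtain v where v: "v \<in> U" and xv: "x = mvec (blk n (\<lambda>i k. p i k)) v" by blast
      have vF: "v \<in> Finf" using v U(2) by blast
      have tlU: "tl_vec n v \<in> U" by (rule tl_vec_U[OF U(1) U(3) vF])
      have trU: "v - tl_vec n v \<in> U" using U(1) v tlU by (rule fs.subspace_diff)
      have trF: "v - tl_vec n v \<in> Fn n" by (simp add: Fn_char tl_vec_def)
      have trS: "v - tl_vec n v \<in> fs.span (q ` J)" using trU trF U(4) by blast
      have fin: "finite {i. (if i < n then pair (p i) v else v i) \<noteq> 0}"
        by (rule finite_subset[of _ "{..<n} \<union> {i. v i \<noteq> 0}"]) (use vF in \<open>auto simp: Finf_def\<close>)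
      have xF: "x \<in> Finf" using fin mv[OF vF] xv by (simp add: Finf_def)
      have "x i = 0" if i: "i < n" "i \<notin> J" for i
      proof -
      have "pair (p i) (v - tl_vec n v) = 0"
      proof (rule pair_span2[OF _ trS])
        fix s assume "s \<in> q ` J"
        then obtain j where "j \<in> J" "s = q j" by blast
        then show "pair (p i) s = 0" using pq i J by (auto simp: idm_def)
      qed
      moreover have "pair (p i) (tl_vec n v) = 0" using pF i by (simp add: pair_tl)
      ultimately have "pair (p i) v = 0" using pair_diff2[of "p i" v "tl_vec n v"] by simp
      then show "x i = 0" using mv[OF vF] i xv by simp
      qed
      then show "x \<in> {z \<in> Finf. \<forall>i<n. i \<notin> J \<longrightarrow> z i = 0}" using xF by blast
    qed
    show "{z \<in> Finf. \<forall>i<n. i \<notin> J \<longrightarrow> z i = 0} \<subseteq> mvec (blk n (\<lambda>i k. p i k)) ` U"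
    proof
      fix z :: "nat \<Rightarrow> 'k" assume "z \<in> {z \<in> Finf. \<forall>i<n. i \<notin> J \<longrightarrow> z i = 0}"
      then have zF: "z \<in> Finf" and z0: "\<forall>i<n. i \<notin> J \<longrightarrow> z i = 0" by auto
      let ?s = "\<Sum>j\<in>J. fscale (z j) (q j)"
      define v where "v = ?s + tl_vec n z"
      have sS: "?s \<in> fs.span (q ` J)"
        by (intro fs.span_sum fs.span_scale fs.span_base) auto
      have vU: "v \<in> U" unfolding v_def
        using U(1) spU sS tl_vec_U[OF U(1) U(3) zF] by (blast intro: fs.subspace_add)
      have vF: "v \<in> Finf" using vU U(2) by blast
      have fJ: "finite J" using J finite_subset by blast
      have "mvec (blk n (\<lambda>i k. p i k)) v = z"
      proof
        fix i
        show "mvec (blk n (\<lambda>i k. p i k)) v i = z i"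
        proof (cases "i < n")
          case True
          have "pair (p i) v = (\<Sum>j\<in>J. z j * pair (p i) (q j)) + pair (p i) (tl_vec n z)"
            unfolding v_def by (simp add: pair_add2 pair_sum2 pair_scale2)
          also have "\<dots> = (\<Sum>j\<in>J. z j * idm i j)"
          proof -
            have "pair (p i) (tl_vec n z) = 0" using pF True by (simp add: pair_tl)
            moreover have "(\<Sum>j\<in>J. z j * pair (p i) (q j)) = (\<Sum>j\<in>J. z j * idm i j)"
              using pq True J by (intro sum.cong refl) auto
            ultimately show ?thesis by simp
          qed
          also have "\<dots> = (if i \<in> J then z i else 0)"
            using fJ by (simp add: idm_def if_distrib sum.delta cong: if_cong)
          also have "\<dots> = z i" using z0 True by auto
          finally show ?thesis using mv[OF vF] True by simp
        next
          case False
          have "v i = (\<Sum>j\<in>J. z j * q j i) + z i"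
            unfolding v_def using False by (simp add: sum_fun_apply tl_vec_def)
          also have "\<dots> = z i" using qF J False by (auto simp: Fn_char intro!: sum.neutral)
          finally show ?thesis using mv[OF vF] False by simp
        qed
      qed
      then show "z \<in> mvec (blk n (\<lambda>i k. p i k)) ` U" using vU by blast
    qed
  qed
qed


lemma cancel_blk:
  assumes "isblk n A" "isblk n B" "isblk n Z" "mmult A B = idm"
  shows "mmult A (mmult B Z) = Z"
  using isblk_assoc[OF assms(1,2,3)] assms(4) mmult_idm_left by metis

lemma ortho_Fn:
  fixes X :: "(nat \<Rightarrow> 'k::field) set"
  assumes "\<forall>i\<ge>n. ev i \<in> X" "y \<in> Finf" "\<forall>x\<in>X. pair y x = 0"
  shows "y \<in> Fn n"
  unfolding Fn_char mem_Collect_eq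
proof (intro allI impI)
  fix i assume "n \<le> i"
  then have "ev i \<in> X" using assms(1) by blast
  then have "pair y (ev i) = 0" using assms(3) by blast
  then show "y i = 0" using pair_ev2[OF assms(2)] by simp
qed

lemma ortho_cut:
  fixes X :: "(nat \<Rightarrow> 'k::field) set"
  assumes X: "fs.subspace X" "X \<subseteq> Finf" "\<forall>i\<ge>n. ev i \<in> X" and z: "z \<in> Fn n"
    and o: "\<forall>x\<in>X \<inter> Fn n. pair z x = 0"
  shows "\<forall>x\<in>X. pair z x = 0"
proof
  fix x assume x: "x \<in> X"
  have xF: "x \<in> Finf" using x X(2) by blast
  have tlX: "tl_vec n x \<in> X" by (rule tl_vec_U[OF X(1) X(3) xF])
  have "x - tl_vec n x \<in> X" using X(1) x tlX by (rule fs.subspace_diff)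
  moreover have "x - tl_vec n x \<in> Fn n" by (simp add: Fn_char tl_vec_def)
  ultimately have "pair z (x - tl_vec n x) = 0" using o by blast
  then show "pair z x = 0" using pair_diff2[of z x "tl_vec n x"] pair_tl[OF z] by simp
qed


theorem proposition4p9:
  fixes W V :: "(nat \<Rightarrow> 'a::{field,finite}) set" and g :: "nat \<Rightarrow> nat \<Rightarrow> 'a" and n a b c :: nat
  assumes "(W, g, V) \<in> BT n"
    and "a = fs.dim (W \<inter> perpL V)"
    and "b = fs.dim (V \<inter> perpR W)"
    and "c = pairing_rank (W \<inter> Fn n) (V \<inter> Fn n)"
  shows "\<exists>x \<in> GLn n. \<exists>W' g' V'. act x (W, g, V) = (W', g', V') \<and>
           a + b + c \<le> n \<and>
           V' = fs.span (ev ` ({n - b - c..<n - c} \<union> {n - c..})) \<and>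
           W' = fs.span (ev ` ({..<a} \<union> {n - c..})) \<and>
           g' \<in> GLn n \<and>
           (\<forall>i<a. \<forall>j. g' i j = idm i j) \<and>
           (\<forall>i\<in>{a..<n - b - c}. \<forall>j\<ge>n - b - c. g' i j = 0) \<and>
           (\<forall>i\<in>{n - b - c..<n - c}. \<forall>j\<ge>n - b - c. g' i j = idm i j) \<and>
           (\<forall>i\<in>{n - c..<n}. \<forall>j. g' i j = idm i j)"
proof -
  from assms(1) have sW: "smooth W" and sV: "smooth V" and gG: "g \<in> GLinf"
    and gV: "\<forall>v\<in>V. mvec g v = v" and gW: "\<forall>w\<in>W. mvec (mtrans g) w = w"
    and evV: "\<forall>i\<ge>n. ev i \<in> V" and evW: "\<forall>i\<ge>n. ev i \<in> W"
    unfolding BT_def bounding_triple_def by auto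
  have Vs: "fs.subspace V" "V \<subseteq> Finf" and Ws: "fs.subspace W" "W \<subseteq> Finf"
    using sV sW unfolding smooth_def subsp_def by auto
  let ?W0 = "W \<inter> Fn n" and ?V0 = "V \<inter> Fn n"
  have W0: "fs.subspace ?W0" "?W0 \<subseteq> Fn n" using Ws(1) Fn_subspace by (auto intro: fs.subspace_inter)
  have V0: "fs.subspace ?V0" "?V0 \<subseteq> Fn n" using Vs(1) Fn_subspace by (auto intro: fs.subspace_inter)
  have FF: "\<And>x. x \<in> Fn n \<Longrightarrow> x \<in> Finf" using Fn_Finf by blast
  have Aeq: "W \<inter> perpL V = lperp ?V0 ?W0"
  proof
    show "W \<inter> perpL V \<subseteq> lperp ?V0 ?W0"
    proof
      fix w assume w: "w \<in> W \<inter> perpL V"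
      then have wF: "w \<in> Finf" and wo: "\<forall>v\<in>V. pair w v = 0" by (auto simp: perpL_def)
      have wn: "w \<in> Fn n" by (rule ortho_Fn[OF evV wF wo])
      have "pair s w = 0" if "s \<in> ?V0" for s using wo that pair_sym[OF wF FF[of s]] by auto
      then show "w \<in> lperp ?V0 ?W0" using w wn by (auto simp: lperp_def)
    qed
    show "lperp ?V0 ?W0 \<subseteq> W \<inter> perpL V"
    proof
      fix w assume w: "w \<in> lperp ?V0 ?W0"
      then have wW: "w \<in> W" and wn: "w \<in> Fn n" and wo: "\<forall>s\<in>?V0. pair s w = 0" by (auto simp: lperp_def)
      have "\<forall>x\<in>?V0. pair w x = 0" using wo pair_sym[OF FF[OF wn] FF] by auto
      then have "\<forall>x\<in>V. pair w x = 0" by (rule ortho_cut[OF Vs evV wn])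
      then show "w \<in> W \<inter> perpL V" using wW FF[OF wn] by (auto simp: perpL_def)
    qed
  qed
  have Beq: "V \<inter> perpR W = lperp ?W0 ?V0"
  proof
    show "V \<inter> perpR W \<subseteq> lperp ?W0 ?V0"
    proof
      fix v assume v: "v \<in> V \<inter> perpR W"
      then have vF: "v \<in> Finf" and vo: "\<forall>w\<in>W. pair w v = 0" by (auto simp: perpR_def)
      have "\<forall>w\<in>W. pair v w = 0" using vo pair_sym[OF vF] Ws(2) by (metis subsetD)
      then have vn: "v \<in> Fn n" by (rule ortho_Fn[OF evW vF])
      then show "v \<in> lperp ?W0 ?V0" using v vo by (auto simp: lperp_def)
    qed
    show "lperp ?W0 ?V0 \<subseteq> V \<inter> perpR W"
    proof
      fix v assume v: "v \<in> lperp ?W0 ?V0"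
      then have vV: "v \<in> V" and vn: "v \<in> Fn n" and vo: "\<forall>s\<in>?W0. pair s v = 0" by (auto simp: lperp_def)
      have "\<forall>x\<in>?W0. pair v x = 0" using vo pair_sym[OF FF[OF vn] FF] by auto
      then have "\<forall>x\<in>W. pair v x = 0" by (rule ortho_cut[OF Ws evW vn])
      then have "\<forall>x\<in>W. pair x v = 0" using pair_sym[OF FF[OF vn]] Ws(2) by (metis subsetD)
      then show "v \<in> V \<inter> perpR W" using vV FF[OF vn] by (auto simp: perpR_def)
    qed
  qed
  have a': "a = fs.dim (lperp ?V0 ?W0)" using assms(2) Aeq by simp
  have b': "b = fs.dim (lperp ?W0 ?V0)" using assms(3) Beq by simp
  have c': "c = fs.dim ?V0 - b" using assms(4) b' by (simp add: pairing_rank_def lperp_def)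
  obtain r f where rF: "\<forall>i<n. r i \<in> Fn n" and fF: "\<forall>i<n. f i \<in> Fn n"
    and P2: "\<forall>i<n. \<forall>j<n. pair (r i) (f j) = idm i j"
    and P3: "\<forall>i<n. \<forall>j<n. (\<Sum>k<n. f k i * r k j) = idm i j"
    and P4: "?V0 = fs.span (f ` {n-b-c..<n})"
    and P5: "?W0 = fs.span (r ` ({..<a} \<union> {n-c..<n}))" and abc: "a + b + c \<le> n"
    using construct[OF W0 V0 a' b' c'] by blast
  define x where "x = blk n (\<lambda>i k. r i k)"
  define y where "y = blk n (\<lambda>i k. f k i)"
  have xb: "isblk n x" and yb: "isblk n y" unfolding x_def y_def by (rule isblk_blk)+
  have xy: "mmult x y = idm"
  proof -
    have "mmult x y = blk n (\<lambda>i j. \<Sum>k<n. r i k * f j k)" unfolding x_def y_def by (rule mmult_blk)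
    also have "\<dots> = blk n (\<lambda>i j. idm i j)"
    proof (rule blk_cong)
      fix i j assume ij: "i < n" "j < n"
      have "pair (r i) (f j) = (\<Sum>k<n. r i k * f j k)" using rF ij by (simp add: pair_Fn)
      then show "(\<Sum>k<n. r i k * f j k) = idm i j" using P2 ij by simp
    qed
    finally show ?thesis by (simp add: blk_idm)
  qed
  have yx: "mmult y x = idm"
  proof -
    have "mmult y x = blk n (\<lambda>i j. \<Sum>k<n. f k i * r k j)" unfolding x_def y_def by (rule mmult_blk)
    also have "\<dots> = blk n (\<lambda>i j. idm i j)"
      by (rule blk_cong) (use P3 in simp)
    finally show ?thesis by (simp add: blk_idm)
  qed
  have xGL: "x \<in> GLn n" by (rule GLn_blk[OF xb yb xy yx])
  have minvx: "minv x = y" by (rule minv_blk[OF xb yb xy yx])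
  have gout: "g i j = idm i j" if "n \<le> i \<or> n \<le> j" for i j
    using that
  proof
    assume i: "n \<le> i"
    have "mvec (mtrans g) (ev i) = ev i" using gW evW i by blast
    then have "mvec (mtrans g) (ev i) j = ev i j" by simp
    moreover have "mvec (mtrans g) (ev i) j = (\<Sum>k\<in>{i}. mtrans g j k * ev i k)"
      by (rule mvec_alt) (auto simp: ev_def)
    ultimately show ?thesis by (auto simp: mtrans_def ev_def idm_def split: if_splits)
  next
    assume j: "n \<le> j"
    have "mvec g (ev j) = ev j" using gV evV j by blast
    then have "mvec g (ev j) i = ev j i" by simp
    moreover have "mvec g (ev j) i = (\<Sum>k\<in>{j}. g i k * ev j k)"
      by (rule mvec_alt) (auto simp: ev_def)
    ultimately show ?thesis by (auto simp: ev_def idm_def split: if_splits)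
  qed
  have gGL: "g \<in> GLn n" unfolding GLn_def using gG gout by blast
  have gb: "isblk n g" by (rule GLn_isblk[OF gGL])
  obtain h where hb: "isblk n h" and gh: "mmult g h = idm" and hg: "mmult h g = idm"
    using GLn_inv[OF gGL] by blast
  define g' where "g' = mmult (mmult x g) y"
  have g'b: "isblk n g'" unfolding g'_def by (intro isblk_mmult xb yb gb)
  have actx: "act x (W, g, V) = (mvec (mtrans y) ` W, g', mvec x ` V)"
    unfolding act_def g'_def minvx by simp
  have Vimg: "mvec x ` V = fs.span (ev ` ({n - b - c..<n - c} \<union> {n - c..}))"
  proof -
    have "mvec x ` V = {z \<in> Finf. \<forall>i<n. i \<notin> {n-b-c..<n} \<longrightarrow> z i = 0}"
      unfolding x_def by (rule img[OF rF fF P2 _ Vs evV P4]) auto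
    also have "\<dots> = fs.span (ev ` ({n - b - c..<n - c} \<union> {n - c..}))"
      unfolding span_ev apply auto
      apply (rule ccontr) apply (drule_tac x=i in spec) by auto
    finally show ?thesis .
  qed
  have my: "mtrans y = blk n (\<lambda>i k. f i k)" unfolding y_def mtrans_blk ..
  have Wimg: "mvec (mtrans y) ` W = fs.span (ev ` ({..<a} \<union> {n - c..}))"
  proof -
    have fr: "\<forall>i<n. \<forall>j<n. pair (f i) (r j) = idm i j"
    proof (intro allI impI)
      fix i j assume ij: "i < n" "j < n"
      have "pair (f i) (r j) = pair (r j) (f i)" using fF rF ij FF pair_sym by metis
      then show "pair (f i) (r j) = idm i j" using P2 ij idm_sym by metis
    qed
    have "mvec (mtrans y) ` W = {z \<in> Finf. \<forall>i<n. i \<notin> {..<a} \<union> {n-c..<n} \<longrightarrow> z i = 0}"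
      unfolding my by (rule img[OF fF rF fr _ Ws evW P5]) (use abc in auto)
    also have "\<dots> = fs.span (ev ` ({..<a} \<union> {n - c..}))"
      unfolding span_ev apply auto
      apply (rule ccontr) apply (drule_tac x=i in spec) by auto
    finally show ?thesis .
  qed
  define G' where "G' i j = (\<Sum>l<n. (\<Sum>k<n. r i k * g k l) * f j l)" for i j
  have g'blk: "g' = blk n G'"
  proof -
    have gg: "g = blk n g" using gb by (simp add: isblk_def)
    have "g' = mmult (mmult (blk n (\<lambda>i k. r i k)) (blk n g)) (blk n (\<lambda>i k. f k i))"
      unfolding g'_def x_def y_def using gg by simp
    also have "\<dots> = blk n G'" unfolding mmult_blk G'_def ..
    finally show ?thesis .
  qed
  have swap: "G' i j = (\<Sum>k<n. r i k * (\<Sum>l<n. g k l * f j l))" for i j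
  proof -
    have "G' i j = (\<Sum>l<n. \<Sum>k<n. r i k * (g k l * f j l))"
      unfolding G'_def sum_distrib_right by (simp only: mult.assoc)
    also have "\<dots> = (\<Sum>k<n. \<Sum>l<n. r i k * (g k l * f j l))" by (rule sum.swap)
    also have "\<dots> = (\<Sum>k<n. r i k * (\<Sum>l<n. g k l * f j l))" unfolding sum_distrib_left ..
    finally show ?thesis .
  qed
  have E1: "g' i j = idm i j" if i: "i < n" and j: "n - b - c \<le> j" "j < n" for i j
  proof -
    have "f j \<in> fs.span (f ` {n-b-c..<n})" using j by (intro fs.span_base) auto
    then have fjV: "f j \<in> V" using P4 by blast
    have fjF: "f j \<in> Finf" using fF j FF by blast
    have mv: "mvec g (f j) = f j" using gV fjV by blast
    have gg: "g = blk n g" using gb by (simp add: isblk_def)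
    have "mvec (blk n g) (f j) = (\<lambda>k. if k < n then (\<Sum>l<n. g k l * f j l) else f j k)"
      by (rule mvec_blk[OF fjF])
    then have col: "(\<Sum>l<n. g k l * f j l) = f j k" if "k < n" for k
      using mv gg that by (metis (mono_tags, lifting))
    have "G' i j = (\<Sum>k<n. r i k * f j k)" unfolding swap using col by simp
    also have "\<dots> = pair (r i) (f j)" using rF i pair_Fn[of "r i" n "f j"] by simp
    also have "\<dots> = idm i j" using P2 i j by simp
    finally show ?thesis using g'blk i j by (simp add: blk_def)
  qed
  have E2: "g' i j = idm i j" if i: "i < a \<or> (n - c \<le> i \<and> i < n)" and j: "j < n" for i j
  proof -
    have iI: "i \<in> {..<a} \<union> {n-c..<n}" using i by auto
    have "r i \<in> fs.span (r ` ({..<a} \<union> {n-c..<n}))" using iI by (intro fs.span_base) auto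
    then have riW: "r i \<in> W" using P5 by blast
    have iN: "i < n" using i abc by auto
    have riF: "r i \<in> Finf" using rF iN FF by blast
    have mv: "mvec (mtrans g) (r i) = r i" using gW riW by blast
    have gg: "mtrans g = blk n (\<lambda>a b. g b a)" using gb mtrans_blk[of n g] by (simp add: isblk_def)
    have "mvec (blk n (\<lambda>a b. g b a)) (r i) = (\<lambda>l. if l < n then (\<Sum>k<n. g k l * r i k) else r i l)"
      by (rule mvec_blk[OF riF])
    then have row: "(\<Sum>k<n. g k l * r i k) = r i l" if "l < n" for l
      using mv gg that by (metis (mono_tags, lifting))
    have "G' i j = (\<Sum>l<n. r i l * f j l)" unfolding G'_def
      by (intro sum.cong refl) (use row in \<open>simp add: mult.commute\<close>)
    also have "\<dots> = pair (r i) (f j)" using rF iN pair_Fn[of "r i" n "f j"] by simp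
    also have "\<dots> = idm i j" using P2 iN j by simp
    finally show ?thesis using g'blk iN j by (simp add: blk_def)
  qed
  have gout': "g' i j = idm i j" if "n \<le> i \<or> n \<le> j" for i j
    by (rule isblk_out[OF g'b that])
  define k' where "k' = mmult (mmult x h) y"
  have k'b: "isblk n k'" unfolding k'_def by (intro isblk_mmult xb yb hb)
  have xgb: "isblk n (mmult x g)" by (intro isblk_mmult xb gb)
  have xhb: "isblk n (mmult x h)" by (intro isblk_mmult xb hb)
  have "mmult g' k' = mmult (mmult x g) (mmult y (mmult (mmult x h) y))"
    unfolding g'_def k'_def by (rule isblk_assoc[OF xgb yb isblk_mmult[OF xhb yb]])
  also have "mmult y (mmult (mmult x h) y) = mmult h y"
    using isblk_assoc[OF xb hb yb] cancel_blk[OF yb xb isblk_mmult[OF hb yb] yx] by simp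
  also have "mmult (mmult x g) (mmult h y) = mmult x (mmult g (mmult h y))"
    by (rule isblk_assoc[OF xb gb isblk_mmult[OF hb yb]])
  also have "mmult g (mmult h y) = y" by (rule cancel_blk[OF gb hb yb gh])
  finally have g'k': "mmult g' k' = idm" using xy by simp
  have "mmult k' g' = mmult (mmult x h) (mmult y (mmult (mmult x g) y))"
    unfolding g'_def k'_def by (rule isblk_assoc[OF xhb yb isblk_mmult[OF xgb yb]])
  also have "mmult y (mmult (mmult x g) y) = mmult g y"
    using isblk_assoc[OF xb gb yb] cancel_blk[OF yb xb isblk_mmult[OF gb yb] yx] by simp
  also have "mmult (mmult x h) (mmult g y) = mmult x (mmult h (mmult g y))"
    by (rule isblk_assoc[OF xb hb isblk_mmult[OF gb yb]])
  also have "mmult h (mmult g y) = y" by (rule cancel_blk[OF hb gb yb hg])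
  finally have k'g': "mmult k' g' = idm" using xy by simp
  have g'GL: "g' \<in> GLn n" by (rule GLn_blk[OF g'b k'b g'k' k'g'])
  show ?thesis
  proof (rule bexI[OF _ xGL], intro exI conjI)
    show "act x (W, g, V) = (mvec (mtrans y) ` W, g', mvec x ` V)" by (rule actx)
    show "a + b + c \<le> n" by (rule abc)
    show "mvec x ` V = fs.span (ev ` ({n - b - c..<n - c} \<union> {n - c..}))" by (rule Vimg)
    show "mvec (mtrans y) ` W = fs.span (ev ` ({..<a} \<union> {n - c..}))" by (rule Wimg)
    show "g' \<in> GLn n" by (rule g'GL)
    show "\<forall>i<a. \<forall>j. g' i j = idm i j"
    proof (intro allI impI)
      fix i j assume i: "i < a"
      show "g' i j = idm i j"
      proof (cases "j < n")
        case True then show ?thesis using E2 i by blast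
      next
        case False then show ?thesis using gout' by simp
      qed
    qed
    show "\<forall>i\<in>{a..<n - b - c}. \<forall>j\<ge>n - b - c. g' i j = 0"
    proof (intro ballI allI impI)
      fix i j assume i: "i \<in> {a..<n - b - c}" and j: "n - b - c \<le> j"
      have ij: "i \<noteq> j" "i < n" using i j by auto
      show "g' i j = 0"
      proof (cases "j < n")
        case True then show ?thesis using E1[OF ij(2) j True] ij by (simp add: idm_def)
      next
        case False then show ?thesis using gout'[of i j] ij by (simp add: idm_def)
      qed
    qed
    show "\<forall>i\<in>{n - b - c..<n - c}. \<forall>j\<ge>n - b - c. g' i j = idm i j"
    proof (intro ballI allI impI)
      fix i j assume i: "i \<in> {n - b - c..<n - c}" and j: "n - b - c \<le> j"
      have iN: "i < n" using i by auto
      show "g' i j = idm i j"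
      proof (cases "j < n")
        case True then show ?thesis using E1[OF iN j True] by simp
      next
        case False then show ?thesis using gout' by simp
      qed
    qed
    show "\<forall>i\<in>{n - c..<n}. \<forall>j. g' i j = idm i j"
    proof (intro ballI allI)
      fix i j assume i: "i \<in> {n - c..<n}"
      show "g' i j = idm i j"
      proof (cases "j < n")
        case True then show ?thesis using E2 i by auto
      next
        case False then show ?thesis using gout' by simp
      qed
    qed
  qed
qed

end
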